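(* Let $k,r,s\in\mathbb{N}$ and $C>1$ with $2\leq k\leq r$, and suppose $p=p(n)\geq Cn^{-2/k}$. Suppose that $\underline{\bm{H}}$ is such that: 1. $\underline{\bm{H}}\in\bm{H_1}(r\times s)$ if $r/k\in\mathbb{N}$; 2. $\underline{\bm{H}}\in\bm{H_2}(r\times s)$ if $r/k\notin\mathbb{N}$ and $k<r/2$; 3. $\underline{\bm{H}}\in\bm{{\mathcal H}_3}(r\times s)$ if $r/2<k<r$. Then if $F$ is an $(\overline{\underline{\bm{H}}},\overline{H_{\mathrm{det}}})$-absorbing gadget with base set $W$ of size $s$, we have $\Phi_{F\setminus W}\geq Cn$ and $\Phi_{F,W}\geq Cn^{1/k}$.
   Context: Let $r^*:=\lceil r/k\rceil$ and $q:=r-k(r^*-1)$ (so $0<q\le k$). $H_{\mathrm{det}}$ is the complete $r^*$-partite graph with $r^*-1$ parts of size $k$ and one of size $q$; $\overline{H_{\mathrm{det}}}$ is the graph on the same $r$ vertices whose edges are exactly the pairs not in $H_{\mathrm{det}}$. For an $(r+1)$-vertex graph $H$ with distinguished ordered pair $(w_1,w_2)$, $\overline{H}$ is the graph on the same vertex set (same distinguished pair) whose edges are all pairs other than $w_1w_2$ that are not edges of $H$. For a vector $\bm{H}=(H^1,\dots,H^t)$, $\overline{\bm{H}}:=(\overline{H^1},\dots,\overline{H^t})$, and for a family $\underline{\bm{H}}=\{\bm{H}_{i,j}\}$, $\overline{\underline{\bm{H}}}:=\{\overline{\bm{H}_{i,j}}\}$. Specific vectors: (Case $r/k\in\mathbb{N}$)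 with $r^*=r/k$, $H_1$ is the complete $(r^*+1)$-partite graph with $r^*$ parts of size $k$ and one part $\{w_1\}$ of size $1$, minus the edge $w_1w_2$ where $w_2$ is a vertex of a part of size $k$, with distinguished pair $(w_1,w_2)$; $H_1'$ is the same graph with distinguished pair $(w_2,w_1)$; $\bm{H_1}:=(H_1,H_1')$. (Case $r/k\notin\mathbb{N}$, $k<r/2$) $H_0$ is the complete $r^*$-partite graph with $r^*-1$ parts of size $k$ and one of size $q+1$, distinguished pair two vertices of the part of size $q+1$; $H_0'$ is the same graph with distinguished pair in two different parts of size $k$; $\bm{H_2}:=(H_0,H_0',H_0',H_0)$. (Case $r/2<k<r$) with $q=r-k$ and $c:=\lceil r/q\rceil$, $H_0:=K_{k,q+1}$ with distinguished pair two vertices of the part of size $q+1$, $H_0':=K_{k,q+1}$ with first distinguished vertex in the part of size $k$ and second in the part of size $q+1$; $\bm{{\mathcal H}_3}$ is the set of vectors $\bm{H}\in\{H_0,H_0'\}^t$ with $3\leq t\leq c(2^{c+1}+1)$, first and last entries $H_0$, and some entry in positions $2,\dots,t-1$ equal to $H_0'$. For a set $\bm{{\mathcal H}}$ of vectors (or a single vector, regarded as a one-element set), $\bm{{\mathcal H}}(r\times s)$ is the set of labelled families $\{\bm{H}_{i,j}:i\in[r],j\in[s]\}$ with all $\bm{H}_{i,j}\in\bm{{\mathcal H}}$. Paths and gadgets: an $\bm{H}$-path for $\bm{H}=(H^1,\dots,H^t)$ is obtained from disjoint copies of the $H^i$ by identifying the second distinguished vertex of $H^i$ with the first of $H^{i+1}$;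 endpoints are the first distinguished vertex of $H^1$ and second of $H^t$. For an $r$-vertex graph $H$ and $\{\bm{H}_{i,j}:i\in[r],j\in[s]\}$, an $(\underline{\bm{H}},H)$-absorbing gadget is obtained by taking disjoint $\bm{H}_{i,j}$-paths with first endpoint $u_{i,j}$ and last endpoint $v_{i,j}$, placing a copy of $H$ on $\{v_{i,j}:i\in[r]\}$ for each $j$, identifying $u_{i,1},\dots,u_{i,s}$ into one vertex for each $2\le i\le r$, and renaming $u_{1,j}$ as $w_j$; the base set is $W=\{w_1,\dots,w_s\}$. $\Phi$: for a graph $F$ and $W\subseteq V(F)$ spanning no edges, $\Phi_{F,W}=\min\{n^{v_H-|V(H)\cap W|}p^{e_H}:H\subseteq F,e_H>0\}$, and $\Phi_{F}=\Phi_{F,\emptyset}$. *)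

theory Defs
  imports Complex_Main
begin

text \<open>A graph is a pair (vertex set, edge set); edges are 2-element sets.
  A rooted graph additionally carries an ordered distinguished pair (w1,w2).\<close>

type_synonym 'a graph = "'a set \<times> 'a set set"
type_synonym 'a rgraph = "'a graph \<times> 'a \<times> 'a"

definition wf_graph :: "'a graph \<Rightarrow> bool" where
  "wf_graph G \<longleftrightarrow> finite (fst G) \<and>
     (\<forall>e\<in>snd G. \<exists>x y. x \<noteq> y \<and> x \<in> fst G \<and> y \<in> fst G \<and> e = {x, y})"

definition graph_iso :: "'a graph \<Rightarrow> 'b graph \<Rightarrow> ('a \<Rightarrow> 'b) \<Rightarrow> bool" where
  "graph_iso F G f \<longleftrightarrow> bij_betw f (fst F) (fst G) \<and>
     (\<forall>x\<in>fst F. \<forall>y\<in>fst F. {x, y} \<in> snd F \<longleftrightarrow> {f x, f y} \<in> snd G)"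

text \<open>Complete multipartite graph with parts of the given sizes; vertex (i,j) is the
  j-th vertex of part i.\<close>
definition complete_multipartite :: "nat list \<Rightarrow> (nat \<times> nat) graph" where
  "complete_multipartite ps =
     (let V = {(i, j). i < length ps \<and> j < ps ! i}
      in (V, {{x, y} | x y. x \<in> V \<and> y \<in> V \<and> fst x \<noteq> fst y}))"

definition gcompl :: "'a graph \<Rightarrow> 'a graph" where
  "gcompl G = (fst G, {{x, y} | x y. x \<in> fst G \<and> y \<in> fst G \<and> x \<noteq> y \<and> {x, y} \<notin> snd G})"

definition rcompl :: "'a rgraph \<Rightarrow> 'a rgraph" where
  "rcompl R = (case R of (G, w1, w2) \<Rightarrow>
     ((fst G, {{x, y} | x y. x \<in> fst G \<and> y \<in> fst G \<and> x \<noteq> y \<and> {x, y} \<noteq> {w1, w2}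
                              \<and> {x, y} \<notin> snd G}), w1, w2))"

definition rstar :: "nat \<Rightarrow> nat \<Rightarrow> nat" where
  "rstar r k = nat \<lceil>real r / real k\<rceil>"

definition qq :: "nat \<Rightarrow> nat \<Rightarrow> nat" where
  "qq r k = r - k * (rstar r k - 1)"

definition Hdet :: "nat \<Rightarrow> nat \<Rightarrow> (nat \<times> nat) graph" where
  "Hdet r k = complete_multipartite (replicate (rstar r k - 1) k @ [qq r k])"

definition H1 :: "nat \<Rightarrow> nat \<Rightarrow> (nat \<times> nat) rgraph" where
  "H1 r k = (let m = r div k; G = complete_multipartite (replicate m k @ [1]);
                 w1 = (m, 0); w2 = (0, 0)
             in ((fst G, snd G - {{w1, w2}}), w1, w2))"

definition H1' :: "nat \<Rightarrow> nat \<Rightarrow> (nat \<times> nat) rgraph" where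
  "H1' r k = (case H1 r k of (G, w1, w2) \<Rightarrow> (G, w2, w1))"

definition vecH1 :: "nat \<Rightarrow> nat \<Rightarrow> (nat \<times> nat) rgraph list set" where
  "vecH1 r k = {[H1 r k, H1' r k]}"

definition H0_2 :: "nat \<Rightarrow> nat \<Rightarrow> (nat \<times> nat) rgraph" where
  "H0_2 r k = (complete_multipartite (replicate (rstar r k - 1) k @ [qq r k + 1]),
               (rstar r k - 1, 0), (rstar r k - 1, 1))"

definition H0'_2 :: "nat \<Rightarrow> nat \<Rightarrow> (nat \<times> nat) rgraph" where
  "H0'_2 r k = (complete_multipartite (replicate (rstar r k - 1) k @ [qq r k + 1]),
                (0, 0), (1, 0))"

definition vecH2 :: "nat \<Rightarrow> nat \<Rightarrow> (nat \<times> nat) rgraph list set" where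
  "vecH2 r k = {[H0_2 r k, H0'_2 r k, H0'_2 r k, H0_2 r k]}"

text \<open>Case r/2 < k < r; q = r - k, K_{k,q+1} has part 0 of size k and part 1 of size q+1.\<close>
definition H0_3 :: "nat \<Rightarrow> nat \<Rightarrow> (nat \<times> nat) rgraph" where
  "H0_3 r k = (complete_multipartite [k, r - k + 1], (1, 0), (1, 1))"

definition H0'_3 :: "nat \<Rightarrow> nat \<Rightarrow> (nat \<times> nat) rgraph" where
  "H0'_3 r k = (complete_multipartite [k, r - k + 1], (0, 0), (1, 0))"

definition cc :: "nat \<Rightarrow> nat \<Rightarrow> nat" where
  "cc r k = nat \<lceil>real r / real (r - k)\<rceil>"

definition vecH3 :: "nat \<Rightarrow> nat \<Rightarrow> (nat \<times> nat) rgraph list set" where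
  "vecH3 r k = {hs. 3 \<le> length hs \<and> length hs \<le> cc r k * (2 ^ (cc r k + 1) + 1)
                   \<and> set hs \<subseteq> {H0_3 r k, H0'_3 r k}
                   \<and> hd hs = H0_3 r k \<and> last hs = H0_3 r k
                   \<and> (\<exists>l. 1 \<le> l \<and> l < length hs - 1 \<and> hs ! l = H0'_3 r k)}"

text \<open>Labelled families \<open>\<H>(r \<times> s)\<close> (indices 0-based: i < r, j < s).\<close>
definition fam_set :: "'x set \<Rightarrow> nat \<Rightarrow> nat \<Rightarrow> (nat \<Rightarrow> nat \<Rightarrow> 'x) set" where
  "fam_set S r s = {fam. \<forall>i<r. \<forall>j<s. fam i j \<in> S}"

text \<open>The H-path: copy l has vertices (l,v); the second distinguished vertex of copy l
  is identified with the first distinguished vertex of copy l+1.\<close>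
definition path_lab :: "'a rgraph list \<Rightarrow> nat \<Rightarrow> 'a \<Rightarrow> nat \<times> 'a" where
  "path_lab hs l v = (if Suc l < length hs \<and> v = snd (snd (hs ! l))
                      then (Suc l, fst (snd (hs ! Suc l))) else (l, v))"

definition path_graph :: "'a rgraph list \<Rightarrow> (nat \<times> 'a) graph" where
  "path_graph hs = ((\<Union>l<length hs. path_lab hs l ` fst (fst (hs ! l))),
                    (\<Union>l<length hs. (image (path_lab hs l)) ` snd (fst (hs ! l))))"

definition path_start :: "'a rgraph list \<Rightarrow> nat \<times> 'a" where
  "path_start hs = (0, fst (snd (hs ! 0)))"

definition path_end :: "'a rgraph list \<Rightarrow> nat \<times> 'a" where
  "path_end hs = (length hs - 1, snd (snd (last hs)))"

text \<open>Gadget labels: vertex x of path (i,j) becomes (i,j,x), except that the first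
  endpoints u_{i,j} with i \<ge> 1 (0-based) are all identified with u_{i,0}.\<close>
definition glab :: "(nat \<Rightarrow> nat \<Rightarrow> 'a rgraph list) \<Rightarrow> nat \<Rightarrow> nat \<Rightarrow> nat \<times> 'a
                     \<Rightarrow> nat \<times> nat \<times> (nat \<times> 'a)" where
  "glab fam i j x = (if 1 \<le> i \<and> x = path_start (fam i j)
                     then (i, 0, path_start (fam i 0)) else (i, j, x))"

text \<open>The gadget; \<sigma> j is the bijection from the indices i < r onto V(H) used to place
  the copy of H on {v_{i,j} : i < r}.\<close>
definition gadget :: "(nat \<Rightarrow> nat \<Rightarrow> 'a rgraph list) \<Rightarrow> 'b graph \<Rightarrow> nat \<Rightarrow> nat
                       \<Rightarrow> (nat \<Rightarrow> nat \<Rightarrow> 'b) \<Rightarrow> (nat \<times> nat \<times> (nat \<times> 'a)) graph" where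
  "gadget fam H r s \<sigma> =
     ((\<Union>i<r. \<Union>j<s. glab fam i j ` fst (path_graph (fam i j))),
      (\<Union>i<r. \<Union>j<s. image (glab fam i j) ` snd (path_graph (fam i j))) \<union>
      (\<Union>j<s. {{glab fam i j (path_end (fam i j)), glab fam i' j (path_end (fam i' j))} | i i'.
                 i < r \<and> i' < r \<and> {\<sigma> j i, \<sigma> j i'} \<in> snd H}))"

definition gadget_base :: "(nat \<Rightarrow> nat \<Rightarrow> 'a rgraph list) \<Rightarrow> nat
                            \<Rightarrow> (nat \<times> nat \<times> (nat \<times> 'a)) set" where
  "gadget_base fam s = {glab fam 0 j (path_start (fam 0 j)) | j. j < s}"

definition is_absorbing_gadget ::
  "(nat \<Rightarrow> nat \<Rightarrow> 'a rgraph list) \<Rightarrow> 'b graph \<Rightarrow> nat \<Rightarrow> nat \<Rightarrow> 'v graph \<Rightarrow> 'v set \<Rightarrow> bool" where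
  "is_absorbing_gadget fam H r s F W \<longleftrightarrow> wf_graph F \<and>
     (\<exists>\<sigma> f. (\<forall>j<s. bij_betw (\<sigma> j) {..<r} (fst H)) \<and>
            graph_iso F (gadget fam H r s \<sigma>) f \<and> f ` W = gadget_base fam s)"

definition Phi :: "nat \<Rightarrow> real \<Rightarrow> 'v graph \<Rightarrow> 'v set \<Rightarrow> real" where
  "Phi n p F W = Min {real n ^ (card VH - card (VH \<inter> W)) * p ^ card EH | VH EH.
                        VH \<subseteq> fst F \<and> EH \<subseteq> snd F \<and> (\<forall>e\<in>EH. e \<subseteq> VH) \<and> card EH > 0}"

abbreviation Phi0 :: "nat \<Rightarrow> real \<Rightarrow> 'v graph \<Rightarrow> real" where
  "Phi0 n p F \<equiv> Phi n p F {}"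

definition delete_vertices :: "'v graph \<Rightarrow> 'v set \<Rightarrow> 'v graph" where
  "delete_vertices F W = (fst F - W, {e \<in> snd F. e \<inter> W = {}})"

end

theory Submission
  imports Defs
begin

definition Dn :: "nat \<Rightarrow> 'a set \<Rightarrow> nat \<Rightarrow> 'a set set \<Rightarrow> bool" where
  "Dn k S c E \<longleftrightarrow> finite (\<Union>E) \<and>
     (\<forall>EH. EH \<subseteq> E \<longrightarrow> EH \<noteq> {} \<longrightarrow> 2 * card EH + c \<le> k * card (\<Union>EH - S))"

lemma Dn_empty: "Dn k S c {}"
  by (simp add: Dn_def)

lemma Dn_finite: "Dn k S c E \<Longrightarrow> finite E"
  unfolding Dn_def by (meson Pow_mono Sup_le_iff finite_Pow_iff finite_subset subset_Pow_Union)

lemma Dn_subset: "Dn k S c E \<Longrightarrow> E' \<subseteq> E \<Longrightarrow> Dn k S c E'"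
  unfolding Dn_def by (meson Sup_subset_mono order_trans rev_finite_subset)

lemma Dn_mono_c: "Dn k S c E \<Longrightarrow> c' \<le> c \<Longrightarrow> Dn k S c' E"
  unfolding Dn_def by (meson add_le_cancel_left order_trans)

lemma Dn_mono_S: 
  assumes "Dn k S c E" "S' \<subseteq> S" shows "Dn k S' c E"
  unfolding Dn_def
proof (intro conjI allI impI)
  show "finite (\<Union>E)" using assms unfolding Dn_def by auto
  fix EH assume h: "EH \<subseteq> E" "EH \<noteq> {}"
  have f: "finite (\<Union>EH)" using assms h unfolding Dn_def by (meson Sup_subset_mono rev_finite_subset)
  have "card (\<Union>EH - S) \<le> card (\<Union>EH - S')" using f assms(2) by (intro card_mono) auto
  then show "2 * card EH + c \<le> k * card (\<Union>EH - S')" using assms h unfolding Dn_def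
    by (meson le_trans mult_le_mono2)
qed

lemma card_two_subsets:
  assumes "finite V" "EH \<subseteq> {e. e \<subseteq> V \<and> card e = 2}"
  shows "2 * card EH \<le> card V * (card V - 1)"
proof -
  have "card EH \<le> card {e. e \<subseteq> V \<and> card e = 2}"
    using assms by (intro card_mono) auto
  also have "\<dots> = card V choose 2" using n_subsets[OF assms(1)] by simp
  finally show ?thesis by (simp add: choose_two)
qed

lemma Dn_block:
  assumes "finite X" "card X \<le> k" "\<forall>e\<in>E. e \<subseteq> X \<and> card e = 2" "X \<inter> S = {}"
  shows "Dn k S k E"
  unfolding Dn_def
proof (intro conjI allI impI)
  show "finite (\<Union>E)" using assms by (meson Sup_least rev_finite_subset)
  fix EH assume h: "EH \<subseteq> E" "EH \<noteq> {}"
  let ?V = "\<Union>EH"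
  have VX: "?V \<subseteq> X" using h assms by blast
  have fV: "finite ?V" using VX assms(1) finite_subset by blast
  have "EH \<subseteq> {e. e \<subseteq> ?V \<and> card e = 2}" using h assms by blast
  then have 1: "2 * card EH \<le> card ?V * (card ?V - 1)" using card_two_subsets fV by blast
  obtain e where e: "e \<in> EH" using h by blast
  have "card e = 2" using e h assms by blast
  moreover have "e \<subseteq> ?V" using e by blast
  ultimately have "2 \<le> card ?V" using fV by (metis card_mono)
  have cV: "card ?V \<le> k" using VX assms by (meson card_mono le_trans)
  have "?V - S = ?V" using VX assms(4) by blast
  have "card ?V * (card ?V - 1) \<le> k * (card ?V - 1)" using cV by simp
  then have "2 * card EH + k \<le> k * (card ?V - 1) + k" using 1 by linarith
  also have "\<dots> = k * card ?V" using \<open>2 \<le> card ?V\<close>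
    by (metis Suc_diff_1 less_le_trans mult_Suc_right pos2 add.commute)
  finally show "2 * card EH + k \<le> k * card (?V - S)" using \<open>?V - S = ?V\<close> by simp
qed

lemma Dn_block1:
  assumes "finite X" "card X \<le> k" "E \<subseteq> {e. e \<subseteq> X \<and> card e = 2} - {{a,b}}"
    "a \<noteq> b" "a \<in> X" "b \<in> X" "X \<inter> S \<subseteq> {a}" "2 \<le> k"
  shows "Dn k S 1 E"
  unfolding Dn_def
proof (intro conjI allI impI)
  have "\<Union>E \<subseteq> X" using assms(3) by blast
  then show "finite (\<Union>E)" using assms(1) finite_subset by blast
  fix EH assume h: "EH \<subseteq> E" "EH \<noteq> {}"
  let ?V = "\<Union>EH"
  have VX: "?V \<subseteq> X" using h assms by blast
  have fV: "finite ?V" using VX assms(1) finite_subset by blast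
  have EHs: "EH \<subseteq> {e. e \<subseteq> ?V \<and> card e = 2}" using h assms by blast
  then have 1: "2 * card EH \<le> card ?V * (card ?V - 1)" using card_two_subsets fV by blast
  obtain e where e: "e \<in> EH" using h by blast
  have "card e = 2" using e h assms by blast
  moreover have "e \<subseteq> ?V" using e by blast
  ultimately have v2: "2 \<le> card ?V" using fV by (metis card_mono)
  have cV: "card ?V \<le> k" using VX assms by (meson card_mono le_trans)
  show "2 * card EH + 1 \<le> k * card (?V - S)"
  proof (cases "a \<in> ?V")
    case False
    then have "?V - S = ?V" using VX assms(7) by blast
    have "card ?V * (card ?V - 1) \<le> k * (card ?V - 1)" using cV by simp
    also have "\<dots> < k * card ?V" using v2 assms(8) by simp
    finally have "2 * card EH + 1 \<le> k * card ?V" using 1 by linarith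
    then show ?thesis using \<open>?V - S = ?V\<close> by simp
  next
    case True
    have "?V - {a} \<subseteq> ?V - S" using VX assms(7) by blast
    then have "card (?V - {a}) \<le> card (?V - S)" using fV by (intro card_mono) auto
    moreover have "card (?V - {a}) = card ?V - 1" using True fV by simp
    ultimately have cs: "card ?V - 1 \<le> card (?V - S)" by simp
    show ?thesis
    proof (cases "card ?V < k")
      case True
      have "card ?V * (card ?V - 1) \<le> (k - 1) * (card ?V - 1)" using True by (intro mult_right_mono) auto
      then have "2 * card EH + 1 \<le> (k - 1) * (card ?V - 1) + 1" using 1 by linarith
      also have "\<dots> \<le> k * (card ?V - 1)"
      proof -
        have "k * (card ?V - 1) = (k - 1) * (card ?V - 1) + (card ?V - 1)" using assms(8) by (cases k) auto
        then show ?thesis using v2 by linarith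
      qed
      also have "\<dots> \<le> k * card (?V - S)" using cs by simp
      finally show ?thesis .
    next
      case False
      have "card ?V \<le> card X" by (rule card_mono[OF assms(1) VX])
      then have "card ?V = card X" using False assms(2) by linarith
      then have VeX: "?V = X" using VX assms(1) by (metis card_subset_eq)
      have "{a,b} \<subseteq> ?V" using VeX assms(5,6) by simp
      moreover have "card {a,b} = 2" using assms(4) by simp
      ultimately have "{a,b} \<in> {e. e \<subseteq> ?V \<and> card e = 2}" by simp
      moreover have "{a,b} \<notin> EH"
      proof
        assume "{a,b} \<in> EH"
        then have "{a,b} \<in> E" using h(1) by blast
        then show False using assms(3) by blast
      qed
      ultimately have "EH \<subseteq> {e. e \<subseteq> ?V \<and> card e = 2} - {{a,b}}" using EHs by auto
      moreover have "finite {e. e \<subseteq> ?V \<and> card e = 2}" using fV by simp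
      ultimately have "card EH \<le> card ({e. e \<subseteq> ?V \<and> card e = 2} - {{a,b}})"
        by (meson card_mono finite_Diff)
      also have "\<dots> = card {e. e \<subseteq> ?V \<and> card e = 2} - 1"
        using \<open>{a,b} \<in> _\<close> by (rule card_Diff_singleton)
      also have "\<dots> = (card ?V choose 2) - 1" using n_subsets[OF fV, of 2] by simp
      finally have "2 * card EH \<le> card ?V * (card ?V - 1) - 2" by (simp add: choose_two)
      moreover have "2 \<le> card ?V * (card ?V - 1)" using v2
        using mult_le_mono[of 2 "card ?V" 1 "card ?V - 1"] by simp
      ultimately have "2 * card EH + 1 < card ?V * (card ?V - 1)" by linarith
      also have "\<dots> \<le> k * (card ?V - 1)" using cV by simp
      also have "\<dots> \<le> k * card (?V - S)" using cs by simp
      finally show ?thesis by simp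
    qed
  qed
qed

lemma Dn_unionI:
  assumes d1: "Dn k S c1 E1" and d2: "Dn k S c2 E2"
    and ov: "card (\<Union>E1 \<inter> \<Union>E2) \<le> d"
    and c1: "c \<le> c1" and c2: "c \<le> c2" and c12: "c + k * d \<le> c1 + c2"
  shows "Dn k S c (E1 \<union> E2)"
  unfolding Dn_def
proof (intro conjI allI impI)
  have f1: "finite (\<Union>E1)" and f2: "finite (\<Union>E2)" using d1 d2 unfolding Dn_def by auto
  then show "finite (\<Union>(E1 \<union> E2))" by simp
  fix EH assume h: "EH \<subseteq> E1 \<union> E2" "EH \<noteq> {}"
  define EH1 where "EH1 = EH \<inter> E1"
  define EH2 where "EH2 = EH - E1"
  have s1: "EH1 \<subseteq> E1" and s2: "EH2 \<subseteq> E2" using h unfolding EH1_def EH2_def by auto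
  have fE1: "finite E1" using d1 Dn_finite by blast
  have fE2: "finite E2" using d2 Dn_finite by blast
  have fEH1: "finite EH1" using s1 fE1 finite_subset by blast
  have fEH2: "finite EH2" using s2 fE2 finite_subset by blast
  have EHu: "EH = EH1 \<union> EH2" unfolding EH1_def EH2_def by blast
  have cEH: "card EH = card EH1 + card EH2"
    unfolding EHu by (rule card_Un_disjoint[OF fEH1 fEH2]) (auto simp: EH1_def EH2_def)
  show "2 * card EH + c \<le> k * card (\<Union>EH - S)"
  proof (cases "EH2 = {}")
    case True
    then have "EH = EH1" using EHu by simp
    have "2 * card EH1 + c1 \<le> k * card (\<Union>EH1 - S)" using d1 s1 h(2) \<open>EH = EH1\<close> unfolding Dn_def by blast
    then show ?thesis using c1 \<open>EH = EH1\<close> by simp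
  next
    case n2: False
    show ?thesis
    proof (cases "EH1 = {}")
      case True
      then have "EH = EH2" using EHu by simp
      have "2 * card EH2 + c2 \<le> k * card (\<Union>EH2 - S)" using d2 s2 h(2) \<open>EH = EH2\<close> unfolding Dn_def by blast
      then show ?thesis using c2 \<open>EH = EH2\<close> by simp
    next
      case n1: False
      have i1: "2 * card EH1 + c1 \<le> k * card (\<Union>EH1 - S)" using d1 s1 n1 unfolding Dn_def by blast
      have i2: "2 * card EH2 + c2 \<le> k * card (\<Union>EH2 - S)" using d2 s2 n2 unfolding Dn_def by blast
      let ?A = "\<Union>EH1 - S" and ?B = "\<Union>EH2 - S"
      have "?A \<subseteq> \<Union>E1" using s1 by blast
      then have fA: "finite ?A" using f1 by (rule finite_subset)
      have "?B \<subseteq> \<Union>E2" using s2 by blast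
      then have fB: "finite ?B" using f2 by (rule finite_subset)
      have "?A \<inter> ?B \<subseteq> \<Union>E1 \<inter> \<Union>E2" using s1 s2 by blast
      then have "card (?A \<inter> ?B) \<le> card (\<Union>E1 \<inter> \<Union>E2)" using f1 by (intro card_mono) auto
      then have "card (?A \<inter> ?B) \<le> d" using ov by linarith
      moreover have "card ?A + card ?B = card (?A \<union> ?B) + card (?A \<inter> ?B)"
        by (rule card_Un_Int[OF fA fB])
      moreover have "?A \<union> ?B = \<Union>EH - S" using EHu by blast
      then have "card (?A \<union> ?B) = card (\<Union>EH - S)" by simp
      ultimately have "card ?A + card ?B \<le> card (\<Union>EH - S) + d" by linarith
      then have "k * card ?A + k * card ?B \<le> k * card (\<Union>EH - S) + k * d"
        by (simp only: add_mult_distrib2[symmetric] mult_le_mono2)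
      then show ?thesis using i1 i2 cEH c12 by linarith
    qed
  qed
qed

lemma Dn_glue:
  assumes "Dn k S c E1" "Dn k S k E2" "card (\<Union>E1 \<inter> \<Union>E2) \<le> 1" "c \<le> k"
  shows "Dn k S c (E1 \<union> E2)"
  using Dn_unionI[OF assms(1,2,3)] assms(4) by simp

lemma Dn_glue':
  assumes "Dn k S c E1" "Dn k S k E2" "\<Union>E1 \<inter> \<Union>E2 \<subseteq> {z}" "c \<le> k"
  shows "Dn k S c (E1 \<union> E2)"
proof -
  have "card (\<Union>E1 \<inter> \<Union>E2) \<le> card {z}" using assms(3) by (intro card_mono) auto
  then show ?thesis using Dn_glue[OF assms(1,2) _ assms(4)] by simp
qed

lemma Dn_disj:
  assumes "Dn k S c E1" "Dn k S c E2" "\<Union>E1 \<inter> \<Union>E2 = {}"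
  shows "Dn k S c (E1 \<union> E2)"
  using Dn_unionI[OF assms(1,2), of 0 c] assms(3) by simp

lemma Dn_map:
  assumes d: "Dn k S c E" and inj: "inj_on f (\<Union>E')" and sub: "(image f) ` E' \<subseteq> E"
    and ST: "\<forall>x\<in>\<Union>E'. x \<in> T \<longrightarrow> f x \<in> S"
  shows "Dn k T c E'"
  unfolding Dn_def
proof (intro conjI allI impI)
  have "f ` \<Union>E' \<subseteq> \<Union>E" using sub by blast
  then have "finite (f ` \<Union>E')" using d unfolding Dn_def by (meson finite_subset)
  then show fE': "finite (\<Union>E')" using inj finite_imageD by blast
  fix EH assume h: "EH \<subseteq> E'" "EH \<noteq> {}"
  let ?EH = "(image f) ` EH"
  have "?EH \<subseteq> E" using h sub by blast
  moreover have "?EH \<noteq> {}" using h by blast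
  ultimately have i: "2 * card ?EH + c \<le> k * card (\<Union>?EH - S)" using d unfolding Dn_def by blast
  have "inj_on (image f) EH"
  proof (rule inj_onI)
    fix x y assume "x \<in> EH" "y \<in> EH" "f ` x = f ` y"
    moreover have "x \<subseteq> \<Union>E'" "y \<subseteq> \<Union>E'" using h(1) \<open>x \<in> EH\<close> \<open>y \<in> EH\<close> by blast+
    ultimately show "x = y" using inj_on_image_eq_iff[OF inj] by blast
  qed
  then have c1: "card ?EH = card EH" by (rule card_image)
  have U: "\<Union>?EH = f ` \<Union>EH" by blast
  have "f ` \<Union>EH - S \<subseteq> f ` (\<Union>EH - T)"
  proof
    fix y assume y: "y \<in> f ` \<Union>EH - S"
    then obtain x where x: "x \<in> \<Union>EH" "y = f x" by blast
    have "x \<in> \<Union>E'" using x h(1) by blast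
    then have "x \<notin> T" using ST x y by blast
    then show "y \<in> f ` (\<Union>EH - T)" using x by blast
  qed
  moreover have "\<Union>EH \<subseteq> \<Union>E'" using h(1) by blast
  then have fEH: "finite (\<Union>EH)" using fE' by (rule finite_subset)
  ultimately have "card (f ` \<Union>EH - S) \<le> card (f ` (\<Union>EH - T))"
    by (intro card_mono) auto
  also have "\<dots> \<le> card (\<Union>EH - T)" by (rule card_image_le) (use fEH in auto)
  finally have "k * card (\<Union>?EH - S) \<le> k * card (\<Union>EH - T)" unfolding U by simp
  then show "2 * card EH + c \<le> k * card (\<Union>EH - T)" using i c1 by linarith
qed

lemma Dn_map_fwd:
  assumes d: "Dn k S c E" and inj: "inj_on g (\<Union>E)"
    and ST: "\<forall>x\<in>\<Union>E. g x \<in> T \<longrightarrow> x \<in> S"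
  shows "Dn k T c ((image g) ` E)"
proof (rule Dn_map[OF d, where f="inv_into (\<Union>E) g"])
  have U: "\<Union>((image g) ` E) = g ` \<Union>E" by blast
  show "inj_on (inv_into (\<Union>E) g) (\<Union>((image g) ` E))" unfolding U
    by (rule inj_on_inv_into) simp
  show "image (inv_into (\<Union>E) g) ` (image g) ` E \<subseteq> E"
  proof
    fix e assume "e \<in> image (inv_into (\<Union>E) g) ` (image g) ` E"
    then obtain e0 where e0: "e0 \<in> E" "e = inv_into (\<Union>E) g ` g ` e0" by blast
    have "e0 \<subseteq> \<Union>E" using e0 by blast
    then have "e = e0" using e0 inv_into_image_cancel[OF inj] by blast
    then show "e \<in> E" using e0 by simp
  qed
  show "\<forall>x\<in>\<Union>((image g) ` E). x \<in> T \<longrightarrow> inv_into (\<Union>E) g x \<in> S"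
  proof (intro ballI impI)
    fix y assume "y \<in> \<Union>((image g) ` E)" "y \<in> T"
    then obtain x where x: "x \<in> \<Union>E" "y = g x" by blast
    then have "inv_into (\<Union>E) g y = x" using inj by simp
    moreover have "g x \<in> T" using x(2) \<open>y \<in> T\<close> by simp
    then have "x \<in> S" using ST x(1) by blast
    ultimately show "inv_into (\<Union>E) g y \<in> S" by simp
  qed
qed

lemma Dn_UN_disj:
  assumes "finite I" "\<forall>i\<in>I. Dn k S c (X i)" "\<forall>i\<in>I. \<forall>j\<in>I. i \<noteq> j \<longrightarrow> \<Union>(X i) \<inter> \<Union>(X j) = {}"
  shows "Dn k S c (\<Union>i\<in>I. X i)"
  using assms
proof (induction I rule: finite_induct)
  case empty
  then show ?case by (simp add: Dn_empty)
next
  case (insert x F)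
  have p1: "\<forall>i\<in>F. Dn k S c (X i)" using insert.prems(1) by blast
  have p2: "\<forall>i\<in>F. \<forall>j\<in>F. i \<noteq> j \<longrightarrow> \<Union>(X i) \<inter> \<Union>(X j) = {}" using insert.prems(2) by blast
  have "Dn k S c (\<Union>i\<in>F. X i)" using insert.IH[OF p1 p2] .
  moreover have "Dn k S c (X x)" using insert.prems(1) by blast
  moreover have "\<forall>i\<in>F. \<Union>(X x) \<inter> \<Union>(X i) = {}"
  proof
    fix i assume "i \<in> F"
    then have "i \<noteq> x" using insert.hyps(2) by blast
    then show "\<Union>(X x) \<inter> \<Union>(X i) = {}" using insert.prems(2) \<open>i \<in> F\<close> by blast
  qed
  then have "\<Union>(X x) \<inter> \<Union>(\<Union>i\<in>F. X i) = {}" by blast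
  ultimately have "Dn k S c (X x \<union> (\<Union>i\<in>F. X i))" using Dn_disj by blast
  then show ?case by simp
qed

lemma Dn_UN_glue:
  assumes "finite I" "Dn k S c E0" "c \<le> k" "\<forall>i\<in>I. Dn k S k (X i)"
    "\<forall>i\<in>I. \<exists>z. \<Union>(X i) \<inter> (\<Union>E0 \<union> (\<Union>i'\<in>I-{i}. \<Union>(X i'))) \<subseteq> {z}"
  shows "Dn k S c (E0 \<union> (\<Union>i\<in>I. X i))"
  using assms
proof (induction I rule: finite_induct)
  case empty
  then show ?case by simp
next
  case (insert x F)
  have h5: "\<forall>i\<in>F. \<exists>z. \<Union>(X i) \<inter> (\<Union>E0 \<union> (\<Union>i'\<in>F-{i}. \<Union>(X i'))) \<subseteq> {z}"
  proof
    fix i assume "i \<in> F"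
    then obtain z where "\<Union>(X i) \<inter> (\<Union>E0 \<union> (\<Union>i'\<in>insert x F-{i}. \<Union>(X i'))) \<subseteq> {z}"
      using insert.prems(4) by blast
    then show "\<exists>z. \<Union>(X i) \<inter> (\<Union>E0 \<union> (\<Union>i'\<in>F-{i}. \<Union>(X i'))) \<subseteq> {z}" by blast
  qed
  have p3: "\<forall>i\<in>F. Dn k S k (X i)" using insert.prems(3) by blast
  have IH: "Dn k S c (E0 \<union> (\<Union>i\<in>F. X i))" using insert.IH[OF insert.prems(1,2) p3 h5] .
  obtain z where z: "\<Union>(X x) \<inter> (\<Union>E0 \<union> (\<Union>i'\<in>insert x F-{x}. \<Union>(X i'))) \<subseteq> {z}"
    using insert.prems(4) by blast
  have "insert x F - {x} = F" using insert.hyps(2) by blast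
  then have "\<Union>(E0 \<union> (\<Union>i\<in>F. X i)) \<inter> \<Union>(X x) \<subseteq> {z}" using z by blast
  then have "Dn k S c ((E0 \<union> (\<Union>i\<in>F. X i)) \<union> X x)"
    using Dn_glue'[OF IH _ _ insert.prems(2)] insert.prems(3) by blast
  then show ?case by (simp add: Un_ac)
qed

lemma path_lab_cases:
  "path_lab hs l x = (l, x) \<or>
   (path_lab hs l x = (Suc l, fst (snd (hs ! Suc l))) \<and> x = snd (snd (hs ! l)) \<and> Suc l < length hs)"
  unfolding path_lab_def by auto

lemma path_lab_inj: "inj (path_lab hs l)"
proof (rule injI)
  fix x y assume "path_lab hs l x = path_lab hs l y"
  then show "x = y" using path_lab_cases[of hs l x] path_lab_cases[of hs l y] by auto
qed

lemma Dn_path_seq: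
  assumes d0: "Dn k S c (Y m0)" and ck: "c \<le> k" and dl: "\<forall>l. m0 < l \<longrightarrow> Dn k S k (Y l)"
    and rg: "\<forall>l. \<Union>(Y l) \<subseteq> range (path_lab hs l)"
  shows "Dn k S c (\<Union>l\<in>{m0..<m1}. Y l)"
proof (induction m1)
  case 0
  then show ?case by (simp add: Dn_empty)
next
  case (Suc n)
  show ?case
  proof (cases "n < m0")
    case True
    then have "{m0..<Suc n} = {}" by auto
    then show ?thesis by (simp add: Dn_empty)
  next
    case False
    show ?thesis
    proof (cases "n = m0")
      case True
      then have "{m0..<Suc n} = {m0}" by auto
      then show ?thesis using d0 by simp
    next
      case False
      then have mn: "m0 < n" using \<open>\<not> n < m0\<close> by simp
      have eq: "{m0..<Suc n} = insert n {m0..<n}" using mn by auto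
      have "\<Union>(\<Union>l\<in>{m0..<n}. Y l) \<inter> \<Union>(Y n) \<subseteq> {(n, fst (snd (hs ! n)))}"
      proof
        fix z assume z: "z \<in> \<Union>(\<Union>l\<in>{m0..<n}. Y l) \<inter> \<Union>(Y n)"
        then obtain l where l: "l \<in> {m0..<n}" "z \<in> \<Union>(Y l)" by blast
        obtain x where x: "z = path_lab hs l x" using l rg by blast
        obtain y where y: "z = path_lab hs n y" using z rg by blast
        have ln: "l < n" using l by simp
        show "z \<in> {(n, fst (snd (hs ! n)))}"
          using path_lab_cases[of hs l x] path_lab_cases[of hs n y] x y ln by auto
      qed
      then have "Dn k S c ((\<Union>l\<in>{m0..<n}. Y l) \<union> Y n)"
        using Dn_glue'[OF Suc.IH _ _ ck] dl mn by blast
      then show ?thesis unfolding eq by (simp add: Un_ac)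
    qed
  qed
qed

definition SP :: "nat list \<Rightarrow> (nat \<times> nat) set set" where
  "SP ps = {{x, y} | x y. x \<in> fst (complete_multipartite ps) \<and> y \<in> fst (complete_multipartite ps)
              \<and> x \<noteq> y \<and> fst x = fst y}"

definition pe :: "('a \<times> 'b) set set \<Rightarrow> 'a \<Rightarrow> ('a \<times> 'b) set set" where
  "pe E p = {e \<in> E. \<forall>z\<in>e. fst z = p}"

lemma fst_cm: "fst (complete_multipartite ps) = {(i, j). i < length ps \<and> j < ps ! i}"
  unfolding complete_multipartite_def Let_def by simp

lemma snd_cm: "snd (complete_multipartite ps) = {{x, y} | x y. x \<in> fst (complete_multipartite ps)
    \<and> y \<in> fst (complete_multipartite ps) \<and> fst x \<noteq> fst y}"
  unfolding complete_multipartite_def Let_def by simp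

lemma rcompl_parts:
  "fst (fst (rcompl (G, a, b))) = fst G" "snd (rcompl (G, a, b)) = (a, b)"
  unfolding rcompl_def by simp_all

lemma rcompl_sub:
  assumes "fst G = fst (complete_multipartite ps)" "snd (complete_multipartite ps) - {{a,b}} \<subseteq> snd G"
  shows "snd (fst (rcompl (G, a, b))) \<subseteq> SP ps - {{a,b}}"
proof
  fix e assume "e \<in> snd (fst (rcompl (G, a, b)))"
  then have "e \<in> {{x, y} |x y. x \<in> fst G \<and> y \<in> fst G \<and> x \<noteq> y \<and> {x, y} \<noteq> {a, b} \<and> {x, y} \<notin> snd G}"
    unfolding rcompl_def by simp
  then obtain x y where e: "e = {x,y}" "x \<in> fst G" "y \<in> fst G" "x \<noteq> y" "{x,y} \<noteq> {a,b}" "{x,y} \<notin> snd G"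
    by blast
  have "fst x = fst y"
  proof (rule ccontr)
    assume "fst x \<noteq> fst y"
    then have "{x,y} \<in> snd (complete_multipartite ps)" using e assms(1) unfolding snd_cm by blast
    then show False using e assms(2) by blast
  qed
  then show "e \<in> SP ps - {{a,b}}" using e assms(1) unfolding SP_def by blast
qed

lemma part_set_card: "card {z \<in> fst (complete_multipartite ps). fst z = p} = (if p < length ps then ps ! p else 0)"
proof -
  have "{z \<in> fst (complete_multipartite ps). fst z = p} = (if p < length ps then {p} \<times> {..<ps ! p} else {})"
    unfolding fst_cm by auto
  then show ?thesis by (simp add: card_cartesian_product)
qed

lemma pe_block:
  assumes "E \<subseteq> SP ps" "ps ! p \<le> k"
  shows "Dn k {} k (pe E p)"
proof (rule Dn_block)
  let ?X = "{z \<in> fst (complete_multipartite ps). fst z = p}"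
  have "?X \<subseteq> {p} \<times> {..<ps ! p}" unfolding fst_cm by auto
  then show "finite ?X" by (rule finite_subset) simp
  show "card ?X \<le> k" using part_set_card[of ps p] assms(2) by simp
  show "\<forall>e\<in>pe E p. e \<subseteq> ?X \<and> card e = 2"
  proof
    fix e assume e: "e \<in> pe E p"
    then have "e \<in> SP ps" using assms(1) unfolding pe_def by blast
    then obtain x y where xy: "e = {x,y}" "x \<in> fst (complete_multipartite ps)"
      "y \<in> fst (complete_multipartite ps)" "x \<noteq> y" unfolding SP_def by blast
    have "\<forall>z\<in>e. fst z = p" using e unfolding pe_def by blast
    then show "e \<subseteq> ?X \<and> card e = 2" using xy by auto
  qed
  show "?X \<inter> {} = {}" by simp
qed

lemma pe_block1:
  assumes "E \<subseteq> SP ps - {{a,b}}" "ps ! p \<le> k" "a \<noteq> b"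
    "a \<in> fst (complete_multipartite ps)" "b \<in> fst (complete_multipartite ps)"
    "fst a = p" "fst b = p" "2 \<le> k"
  shows "Dn k {a} 1 (pe E p)"
proof (rule Dn_block1)
  let ?X = "{z \<in> fst (complete_multipartite ps). fst z = p}"
  have "?X \<subseteq> {p} \<times> {..<ps ! p}" unfolding fst_cm by auto
  then show "finite ?X" by (rule finite_subset) simp
  show "card ?X \<le> k" using part_set_card[of ps p] assms(2) by simp
  show "pe E p \<subseteq> {e. e \<subseteq> ?X \<and> card e = 2} - {{a,b}}"
  proof
    fix e assume e: "e \<in> pe E p"
    then have "e \<in> SP ps" "e \<noteq> {a,b}" using assms(1) unfolding pe_def by blast+
    then obtain x y where xy: "e = {x,y}" "x \<in> fst (complete_multipartite ps)"
      "y \<in> fst (complete_multipartite ps)" "x \<noteq> y" unfolding SP_def by blast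
    have "\<forall>z\<in>e. fst z = p" using e unfolding pe_def by blast
    then show "e \<in> {e. e \<subseteq> ?X \<and> card e = 2} - {{a,b}}" using xy \<open>e \<noteq> {a,b}\<close> by auto
  qed
  show "a \<noteq> b" "a \<in> ?X" "b \<in> ?X" "?X \<inter> {a} \<subseteq> {a}" "2 \<le> k" using assms by auto
qed

lemma E_parts:
  assumes "E \<subseteq> SP ps"
  shows "E = (\<Union>p<length ps. pe E p)"
proof
  show "E \<subseteq> (\<Union>p<length ps. pe E p)"
  proof
    fix e assume e: "e \<in> E"
    then obtain x y where xy: "e = {x,y}" "x \<in> fst (complete_multipartite ps)"
      "y \<in> fst (complete_multipartite ps)" "fst x = fst y" using assms unfolding SP_def by blast
    then have "fst x < length ps" unfolding fst_cm by auto
    moreover have "e \<in> pe E (fst x)" using e xy unfolding pe_def by auto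
    ultimately show "e \<in> (\<Union>p<length ps. pe E p)" by blast
  qed
  show "(\<Union>p<length ps. pe E p) \<subseteq> E" unfolding pe_def by blast
qed

lemma pe_vert: "\<Union>(pe E p) \<subseteq> {z. fst z = p}"
  unfolding pe_def by blast

lemma all_block:
  assumes "E \<subseteq> SP ps" "\<forall>p<length ps. ps ! p \<le> k"
  shows "Dn k {} k E"
proof -
  have "Dn k {} k (\<Union>p\<in>{..<length ps}. pe E p)"
  proof (rule Dn_UN_disj)
    show "\<forall>i\<in>{..<length ps}. Dn k {} k (pe E i)" using pe_block[OF assms(1)] assms(2) by blast
    show "\<forall>i\<in>{..<length ps}. \<forall>j\<in>{..<length ps}. i \<noteq> j \<longrightarrow> \<Union>(pe E i) \<inter> \<Union>(pe E j) = {}"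
    proof (intro ballI impI)
      fix i j :: nat assume "i \<noteq> j"
      have "\<Union>(pe E i) \<subseteq> {z. fst z = i}" "\<Union>(pe E j) \<subseteq> {z. fst z = j}" by (rule pe_vert)+
      then show "\<Union>(pe E i) \<inter> \<Union>(pe E j) = {}" using \<open>i \<noteq> j\<close> by blast
    qed
  qed simp
  then show ?thesis using E_parts[OF assms(1)] by simp
qed

definition good_split :: "nat \<Rightarrow> 'a rgraph list \<Rightarrow> (nat \<times> 'a) set set \<Rightarrow> (nat \<times> 'a) set set \<Rightarrow> bool" where
  "good_split k hs A B \<longleftrightarrow> snd (path_graph hs) = A \<union> B \<and> \<Union>A \<inter> \<Union>B = {} \<and>
     path_end hs \<notin> \<Union>A \<and> path_start hs \<notin> \<Union>B \<and> Dn k {} k A \<and> Dn k {path_start hs} 1 A \<and>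
     Dn k {} k B \<and> 2 \<le> length hs"

lemma UN_image_image: "\<Union>((image g) ` E) = g ` (\<Union>E)" by blast

lemma glab_other: "x \<noteq> path_start (fam i j) \<Longrightarrow> glab fam i j x = (i, j, x)"
  unfolding glab_def by simp

lemma glab_start: "glab fam i j (path_start (fam i j)) =
   (i, if i = 0 then j else 0, path_start (fam i (if i = 0 then j else 0)))"
  unfolding glab_def by simp

lemma glab_inj: "inj (glab fam i j)"
proof (rule injI)
  fix x y assume h: "glab fam i j x = glab fam i j y"
  show "x = y"
  proof (cases "x = path_start (fam i j)"; cases "y = path_start (fam i j)")
    assume "x = path_start (fam i j)" "y = path_start (fam i j)" then show ?thesis by simp
  next
    assume a: "x = path_start (fam i j)" "y \<noteq> path_start (fam i j)"
    then have "glab fam i j y = (i,j,y)" using glab_other[of y fam i j] by blast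
    then show ?thesis using h a glab_start[of fam i j] by (auto split: if_splits)
  next
    assume a: "x \<noteq> path_start (fam i j)" "y = path_start (fam i j)"
    then have "glab fam i j x = (i,j,x)" using glab_other[of x fam i j] by blast
    then show ?thesis using h a glab_start[of fam i j] by (auto split: if_splits)
  next
    assume a: "x \<noteq> path_start (fam i j)" "y \<noteq> path_start (fam i j)"
    then show ?thesis using h glab_other[of x fam i j] glab_other[of y fam i j] by simp
  qed
qed

lemma gadget_base_eq: "gadget_base fam s = {(0, j, path_start (fam 0 j)) | j. j < s}"
  unfolding gadget_base_def using glab_start[of fam 0] by simp

lemma glab_in_base:
  assumes "glab fam i j x \<in> gadget_base fam s"
  shows "i = 0 \<and> x = path_start (fam i j)"
proof (cases "x = path_start (fam i j)")
  case True
  then show ?thesis using assms glab_start[of fam i j] unfolding gadget_base_eq by (auto split: if_splits)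
next
  case False
  then show ?thesis using assms glab_other[of x fam i j] unfolding gadget_base_eq by auto
qed

lemma start_ne_end: "2 \<le> length hs \<Longrightarrow> path_start hs \<noteq> path_end hs"
  unfolding path_start_def path_end_def by auto

lemma gadget_Dn_gen:
  fixes famb :: "nat \<Rightarrow> nat \<Rightarrow> 'a rgraph list" and H :: "'b graph"
    and A B :: "nat \<Rightarrow> nat \<Rightarrow> (nat \<times> 'a) set set"
  assumes gs: "\<forall>i<r. \<forall>j<s. good_split k (famb i j) (A i j) (B i j)"
    and dH: "Dn k {} k (snd H)"
    and sig: "\<forall>j<s. bij_betw (\<sigma> j) {..<r} (fst H)"
    and r1: "1 \<le> r" and ck: "c \<le> k"
    and SB: "S \<subseteq> gadget_base famb s"
    and dA0: "\<forall>j<s. Dn k S c (image (glab famb 0 j) ` A 0 j)"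
  shows "Dn k S c (snd (gadget famb H r s \<sigma>))"
proof -
  define g where "g i j = glab famb i j" for i j
  define st where "st i j = path_start (famb i j)" for i j
  define en where "en i j = path_end (famb i j)" for i j
  define A' where "A' i j = image (g i j) ` A i j" for i j
  define B' where "B' i j = image (g i j) ` B i j" for i j
  define Q where "Q j = {{g i j (en i j), g i' j (en i' j)} | i i'. i < r \<and> i' < r \<and> {\<sigma> j i, \<sigma> j i'} \<in> snd H}" for j
  have gsi: "good_split k (famb i j) (A i j) (B i j)" if "i < r" "j < s" for i j
    using gs that by blast
  have ste: "st i j \<noteq> en i j" if "i < r" "j < s" for i j
    using gsi[OF that] start_ne_end unfolding good_split_def st_def en_def by blast
  have stB: "st i j \<notin> \<Union>(B i j)" if "i < r" "j < s" for i j
    using gsi[OF that] unfolding good_split_def st_def by blast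
  have enA: "en i j \<notin> \<Union>(A i j)" if "i < r" "j < s" for i j
    using gsi[OF that] unfolding good_split_def en_def by blast
  have ABd: "\<Union>(A i j) \<inter> \<Union>(B i j) = {}" if "i < r" "j < s" for i j
    using gsi[OF that] unfolding good_split_def by blast
  have gO: "g i j x = (i, j, x)" if "x \<noteq> st i j" for i j x
    using that glab_other unfolding g_def st_def by metis
  have gS: "g i j (st i j) = (i, if i = 0 then j else 0, st i (if i = 0 then j else 0))" for i j
    unfolding g_def st_def by (rule glab_start)
  have ginj: "inj (g i j)" for i j unfolding g_def by (rule glab_inj)
  have gbase: "i = 0 \<and> x = st i j" if "g i j x \<in> gadget_base famb s" for i j x
    using glab_in_base that unfolding g_def st_def by metis
  have gen: "g i j (en i j) = (i, j, en i j)" if "i < r" "j < s" for i j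
    using gO[of "en i j" i j] ste[OF that] by argo

  have VA: "(\<exists>x. z = (i,j,x) \<and> x \<in> \<Union>(A i j) \<and> x \<noteq> st i j) \<or>
      z = (i, if i = 0 then j else 0, st i (if i = 0 then j else 0))"
    if zA: "z \<in> \<Union>(A' i j)" for i j z
  proof -
    obtain x where x: "x \<in> \<Union>(A i j)" "z = g i j x" using zA unfolding A'_def by blast
    show ?thesis
    proof (cases "x = st i j")
      case True then show ?thesis using x gS by simp
    next
      case False then show ?thesis using x gO by blast
    qed
  qed
  have VB: "\<exists>x. z = (i,j,x) \<and> x \<in> \<Union>(B i j) \<and> x \<noteq> st i j"
    if zB: "z \<in> \<Union>(B' i j)" "i < r" "j < s" for i j z
  proof -
    obtain x where x: "x \<in> \<Union>(B i j)" "z = g i j x" using zB(1) unfolding B'_def by blast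
    have "x \<noteq> st i j" using x stB[OF zB(2,3)] by blast
    then show ?thesis using x gO by blast
  qed
  have VQ: "\<exists>i<r. z = (i, j, en i j)" if zQ: "z \<in> \<Union>(Q j)" "j < s" for j z
  proof -
    from zQ(1) obtain e where e: "z \<in> e" "e \<in> Q j" by (rule UnionE)
    from e(2) obtain i i' where ii: "e = {g i j (en i j), g i' j (en i' j)}" "i < r" "i' < r"
      unfolding Q_def by blast
    then show ?thesis using e gen[OF _ zQ(2)] by auto
  qed

  have DB: "Dn k S k (B' i j)" if "i < r" "j < s" for i j
    unfolding B'_def
  proof (rule Dn_map_fwd)
    show "Dn k {} k (B i j)" using gsi[OF that] unfolding good_split_def by blast
    show "inj_on (g i j) (\<Union>(B i j))" using ginj inj_on_subset by blast
    show "\<forall>x\<in>\<Union>(B i j). g i j x \<in> S \<longrightarrow> x \<in> {}"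
      using gbase SB stB[OF that] by blast
  qed
  have DA: "Dn k S k (A' i j)" if "1 \<le> i" "i < r" "j < s" for i j
    unfolding A'_def
  proof (rule Dn_map_fwd)
    show "Dn k {} k (A i j)" using gsi[OF that(2,3)] unfolding good_split_def by blast
    show "inj_on (g i j) (\<Union>(A i j))" using ginj inj_on_subset by blast
    show "\<forall>x\<in>\<Union>(A i j). g i j x \<in> S \<longrightarrow> x \<in> {}"
      using gbase SB that(1) by fastforce
  qed
  have DQ: "Dn k S k (Q j)" if js: "j < s" for j
  proof (rule Dn_map[OF dH, where f="\<lambda>z. \<sigma> j (fst z)"])
    have inj\<sigma>: "inj_on (\<sigma> j) {..<r}" using sig js bij_betw_def by blast
    show "inj_on (\<lambda>z. \<sigma> j (fst z)) (\<Union>(Q j))"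
    proof (rule inj_onI)
      fix x y assume xy: "x \<in> \<Union>(Q j)" "y \<in> \<Union>(Q j)" "\<sigma> j (fst x) = \<sigma> j (fst y)"
      obtain i where i: "i < r" "x = (i, j, en i j)" using VQ[OF xy(1) js] by blast
      obtain i' where i': "i' < r" "y = (i', j, en i' j)" using VQ[OF xy(2) js] by blast
      have "i = i'" using inj\<sigma> xy(3) i i' by (simp add: inj_on_def)
      then show "x = y" using i i' by simp
    qed
    show "image (\<lambda>z. \<sigma> j (fst z)) ` Q j \<subseteq> snd H"
    proof
      fix e' assume "e' \<in> image (\<lambda>z. \<sigma> j (fst z)) ` Q j"
      then obtain e where e: "e \<in> Q j" "e' = (\<lambda>z. \<sigma> j (fst z)) ` e" by blast
      then obtain i i' where ii: "e = {g i j (en i j), g i' j (en i' j)}" "i < r" "i' < r"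
        "{\<sigma> j i, \<sigma> j i'} \<in> snd H" unfolding Q_def by blast
      have "e' = {\<sigma> j i, \<sigma> j i'}" using e(2) ii gen[OF _ js] by simp
      then show "e' \<in> snd H" using ii by simp
    qed
    show "\<forall>x\<in>\<Union>(Q j). x \<in> S \<longrightarrow> \<sigma> j (fst x) \<in> {}"
    proof (intro ballI impI)
      fix x assume x: "x \<in> \<Union>(Q j)" "x \<in> S"
      obtain i where i: "i < r" "x = (i, j, en i j)" using VQ[OF x(1) js] by blast
      then have "g i j (en i j) \<in> gadget_base famb s" using x(2) SB gen[OF i(1) js] by auto
      then have "en i j = st i j" using gbase by blast
      then show "\<sigma> j (fst x) \<in> {}" using ste[OF i(1) js] by simp
    qed
  qed

  have DY: "Dn k S k (Q j \<union> (\<Union>i\<in>{..<r}. B' i j))" if js: "j < s" for j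
  proof (rule Dn_UN_glue)
    show "Dn k S k (Q j)" using DQ[OF js] .
    show "\<forall>i\<in>{..<r}. Dn k S k (B' i j)" using DB js by blast
    show "\<forall>i\<in>{..<r}. \<exists>z. \<Union>(B' i j) \<inter> (\<Union>(Q j) \<union> (\<Union>i'\<in>{..<r}-{i}. \<Union>(B' i' j))) \<subseteq> {z}"
    proof
      fix i assume "i \<in> {..<r}"
      then have ir: "i < r" by simp
      have "\<Union>(B' i j) \<inter> (\<Union>(Q j) \<union> (\<Union>i'\<in>{..<r}-{i}. \<Union>(B' i' j))) \<subseteq> {(i, j, en i j)}"
      proof
        fix z assume z: "z \<in> \<Union>(B' i j) \<inter> (\<Union>(Q j) \<union> (\<Union>i'\<in>{..<r}-{i}. \<Union>(B' i' j)))"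
        obtain x where x: "z = (i,j,x)" using VB[OF _ ir js] z by blast
        show "z \<in> {(i, j, en i j)}"
        proof (cases "z \<in> \<Union>(Q j)")
          case True
          obtain i'' where "i'' < r" "z = (i'', j, en i'' j)" using VQ[OF True js] by blast
          then show ?thesis using x by simp
        next
          case False
          then obtain i' where i': "i' \<in> {..<r}-{i}" "z \<in> \<Union>(B' i' j)" using z by blast
          then show ?thesis using VB[OF i'(2) _ js] x by auto
        qed
      qed
      then show "\<exists>z. \<Union>(B' i j) \<inter> (\<Union>(Q j) \<union> (\<Union>i'\<in>{..<r}-{i}. \<Union>(B' i' j))) \<subseteq> {z}" by blast
    qed
  qed simp_all
  have DZ: "Dn k S k ({} \<union> (\<Union>j\<in>{..<s}. A' i j))" if i1: "1 \<le> i" "i < r" for i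
  proof (rule Dn_UN_glue)
    show "\<forall>j\<in>{..<s}. Dn k S k (A' i j)" using DA i1 by blast
    show "\<forall>j\<in>{..<s}. \<exists>z. \<Union>(A' i j) \<inter> (\<Union>{} \<union> (\<Union>j'\<in>{..<s}-{j}. \<Union>(A' i j'))) \<subseteq> {z}"
    proof
      fix j assume "j \<in> {..<s}"
      have "\<Union>(A' i j) \<inter> (\<Union>{} \<union> (\<Union>j'\<in>{..<s}-{j}. \<Union>(A' i j'))) \<subseteq> {(i, 0, st i 0)}"
      proof
        fix z assume z: "z \<in> \<Union>(A' i j) \<inter> (\<Union>{} \<union> (\<Union>j'\<in>{..<s}-{j}. \<Union>(A' i j')))"
        then obtain j' where j': "j' \<noteq> j" "z \<in> \<Union>(A' i j')" by blast
        have "z \<in> \<Union>(A' i j)" using z by blast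
        from VA[OF this] VA[OF j'(2)] i1(1) j'(1)
        show "z \<in> {(i, 0, st i 0)}" by auto
      qed
      then show "\<exists>z. \<Union>(A' i j) \<inter> (\<Union>{} \<union> (\<Union>j'\<in>{..<s}-{j}. \<Union>(A' i j'))) \<subseteq> {z}" by blast
    qed
  qed (simp_all add: Dn_empty)
  have DE0: "Dn k S c (\<Union>j\<in>{..<s}. A' 0 j)"
  proof (rule Dn_UN_disj)
    show "\<forall>j\<in>{..<s}. Dn k S c (A' 0 j)" using dA0 unfolding A'_def g_def by blast
    show "\<forall>j\<in>{..<s}. \<forall>j'\<in>{..<s}. j \<noteq> j' \<longrightarrow> \<Union>(A' 0 j) \<inter> \<Union>(A' 0 j') = {}"
    proof (intro ballI impI)
      fix j j' :: nat assume "j \<noteq> j'"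
      show "\<Union>(A' 0 j) \<inter> \<Union>(A' 0 j') = {}"
      proof (rule ccontr)
        assume "\<Union>(A' 0 j) \<inter> \<Union>(A' 0 j') \<noteq> {}"
        then obtain z where "z \<in> \<Union>(A' 0 j)" "z \<in> \<Union>(A' 0 j')" by blast
        from VA[OF this(1)] VA[OF this(2)] \<open>j \<noteq> j'\<close> show False by auto
      qed
    qed
  qed simp
  have DR1: "Dn k S k (\<Union>i\<in>{1..<r}. ({} \<union> (\<Union>j\<in>{..<s}. A' i j)))"
  proof (rule Dn_UN_disj)
    show "\<forall>i\<in>{1..<r}. Dn k S k ({} \<union> (\<Union>j\<in>{..<s}. A' i j))" using DZ by simp
    show "\<forall>i\<in>{1..<r}. \<forall>i'\<in>{1..<r}. i \<noteq> i' \<longrightarrow>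
      \<Union>({} \<union> (\<Union>j\<in>{..<s}. A' i j)) \<inter> \<Union>({} \<union> (\<Union>j\<in>{..<s}. A' i' j)) = {}"
    proof (intro ballI impI)
      fix i i' :: nat assume "i \<noteq> i'"
      show "\<Union>({} \<union> (\<Union>j\<in>{..<s}. A' i j)) \<inter> \<Union>({} \<union> (\<Union>j\<in>{..<s}. A' i' j)) = {}"
      proof (rule ccontr)
        assume "\<Union>({} \<union> (\<Union>j\<in>{..<s}. A' i j)) \<inter> \<Union>({} \<union> (\<Union>j\<in>{..<s}. A' i' j)) \<noteq> {}"
        then obtain z j j' where "z \<in> \<Union>(A' i j)" "z \<in> \<Union>(A' i' j')" by blast
        from VA[OF this(1)] VA[OF this(2)] \<open>i \<noteq> i'\<close> show False by auto
      qed
    qed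
  qed simp
  have DR2: "Dn k S k (\<Union>j\<in>{..<s}. (Q j \<union> (\<Union>i\<in>{..<r}. B' i j)))"
  proof (rule Dn_UN_disj)
    show "\<forall>j\<in>{..<s}. Dn k S k (Q j \<union> (\<Union>i\<in>{..<r}. B' i j))" using DY by simp
    show "\<forall>j\<in>{..<s}. \<forall>j'\<in>{..<s}. j \<noteq> j' \<longrightarrow>
      \<Union>(Q j \<union> (\<Union>i\<in>{..<r}. B' i j)) \<inter> \<Union>(Q j' \<union> (\<Union>i\<in>{..<r}. B' i j')) = {}"
    proof (intro ballI impI)
      fix j j' :: nat assume jj: "j \<in> {..<s}" "j' \<in> {..<s}" "j \<noteq> j'"
      have sj: "fst (snd z) = j" if zz: "z \<in> \<Union>(Q j \<union> (\<Union>i\<in>{..<r}. B' i j))" "j < s" for z j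
      proof (cases "z \<in> \<Union>(Q j)")
        case True
        obtain i'' where "i'' < r" "z = (i'', j, en i'' j)" using VQ[OF True zz(2)] by blast
        then show ?thesis by simp
      next
        case False
        then obtain i where "i < r" "z \<in> \<Union>(B' i j)" using zz(1) by blast
        then obtain x where "z = (i,j,x)" using VB[OF _ _ zz(2)] by blast
        then show ?thesis by simp
      qed
      show "\<Union>(Q j \<union> (\<Union>i\<in>{..<r}. B' i j)) \<inter> \<Union>(Q j' \<union> (\<Union>i\<in>{..<r}. B' i j')) = {}"
      proof (rule ccontr)
        assume "\<Union>(Q j \<union> (\<Union>i\<in>{..<r}. B' i j)) \<inter> \<Union>(Q j' \<union> (\<Union>i\<in>{..<r}. B' i j')) \<noteq> {}"
        then obtain z where z: "z \<in> \<Union>(Q j \<union> (\<Union>i\<in>{..<r}. B' i j))" "z \<in> \<Union>(Q j' \<union> (\<Union>i\<in>{..<r}. B' i j'))"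
          by blast
        have "fst (snd z) = j" using sj[OF z(1)] jj by simp
        moreover have "fst (snd z) = j'" using sj[OF z(2)] jj by simp
        ultimately show False using jj by simp
      qed
    qed
  qed simp
  have VA1: "fst z = i" if "z \<in> \<Union>(A' i j)" "1 \<le> i" for z i j
    using VA[OF that(1)] that(2) by auto
  have VA0: "\<exists>x. z = (0, j, x) \<and> (x \<in> \<Union>(A 0 j) \<or> x = st 0 j)" if zA0: "z \<in> \<Union>(A' 0 j)" for z j
  proof -
    from VA[OF zA0] show ?thesis
    proof
      assume "\<exists>x. z = (0,j,x) \<and> x \<in> \<Union>(A 0 j) \<and> x \<noteq> st 0 j"
      then show ?thesis by blast
    next
      assume "z = (0, if 0 = (0::nat) then j else 0, st 0 (if 0 = (0::nat) then j else 0))"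
      then have "z = (0, j, st 0 j)" by simp
      then show ?thesis by blast
    qed
  qed
  have R1R2: "\<Union>(\<Union>i\<in>{1..<r}. ({} \<union> (\<Union>j\<in>{..<s}. A' i j))) \<inter> \<Union>(\<Union>j\<in>{..<s}. (Q j \<union> (\<Union>i\<in>{..<r}. B' i j))) = {}"
  proof (rule ccontr)
    assume "\<not> ?thesis"
    then obtain z where z1: "z \<in> \<Union>(\<Union>i\<in>{1..<r}. ({} \<union> (\<Union>j\<in>{..<s}. A' i j)))"
      and z2: "z \<in> \<Union>(\<Union>j\<in>{..<s}. (Q j \<union> (\<Union>i\<in>{..<r}. B' i j)))" by blast
    from z1 obtain i j where za: "1 \<le> i" "i < r" "j < s" "z \<in> \<Union>(A' i j)" by force
    from z2 obtain j' where zb: "j' < s" "z \<in> \<Union>(Q j' \<union> (\<Union>i\<in>{..<r}. B' i j'))" by force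
    note z = za zb
    show False
    proof (cases "z \<in> \<Union>(Q j')")
      case True
      obtain i' where i': "i' < r" "z = (i', j', en i' j')" using VQ[OF True z(5)] by blast
      from VA[OF z(4)] show False
      proof
        assume "\<exists>x. z = (i,j,x) \<and> x \<in> \<Union>(A i j) \<and> x \<noteq> st i j"
        then show False using i' enA[OF z(2,3)] by auto
      next
        assume "z = (i, if i = 0 then j else 0, st i (if i = 0 then j else 0))"
        then have "z = (i, 0, st i 0)" using z(1) by simp
        then show False using i' ste[of i 0] z(2,5) by auto
      qed
    next
      case False
      then obtain i' where i': "i' < r" "z \<in> \<Union>(B' i' j')" using z(6) by blast
      obtain y where y: "z = (i', j', y)" "y \<in> \<Union>(B i' j')" "y \<noteq> st i' j'" using VB[OF i'(2) i'(1) z(5)] by blast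
      from VA[OF z(4)] show False
      proof
        assume "\<exists>x. z = (i,j,x) \<and> x \<in> \<Union>(A i j) \<and> x \<noteq> st i j"
        then show False using y ABd[OF z(2,3)] by auto
      next
        assume "z = (i, if i = 0 then j else 0, st i (if i = 0 then j else 0))"
        then have "z = (i, 0, st i 0)" using z(1) by simp
        then show False using y by auto
      qed
    qed
  qed
  have DR: "Dn k S k ((\<Union>i\<in>{1..<r}. ({} \<union> (\<Union>j\<in>{..<s}. A' i j))) \<union> (\<Union>j\<in>{..<s}. (Q j \<union> (\<Union>i\<in>{..<r}. B' i j))))"
    by (rule Dn_disj[OF DR1 DR2 R1R2])
  have E0R: "\<Union>(\<Union>j\<in>{..<s}. A' 0 j) \<inter> \<Union>((\<Union>i\<in>{1..<r}. ({} \<union> (\<Union>j\<in>{..<s}. A' i j))) \<union> (\<Union>j\<in>{..<s}. (Q j \<union> (\<Union>i\<in>{..<r}. B' i j)))) = {}"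
  proof (rule ccontr)
    assume "\<not> ?thesis"
    then obtain z where z1: "z \<in> \<Union>(\<Union>j\<in>{..<s}. A' 0 j)"
      and z3: "z \<in> \<Union>((\<Union>i\<in>{1..<r}. ({} \<union> (\<Union>j\<in>{..<s}. A' i j))) \<union> (\<Union>j\<in>{..<s}. (Q j \<union> (\<Union>i\<in>{..<r}. B' i j))))"
      by blast
    from z1 obtain j where "j < s" "z \<in> \<Union>(A' 0 j)" by force
    note z = this z3
    obtain x where x: "z = (0, j, x)" "x \<in> \<Union>(A 0 j) \<or> x = st 0 j" using VA0[OF z(2)] by blast
    have r0: "0 < r" using r1 by simp
    show False
    proof (cases "z \<in> \<Union>(\<Union>i\<in>{1..<r}. ({} \<union> (\<Union>j\<in>{..<s}. A' i j)))")
      case True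
      then obtain i j' where "1 \<le> i" "z \<in> \<Union>(A' i j')" by force
      then have "fst z = i" using VA1 by blast
      then show False using x \<open>1 \<le> i\<close> by simp
    next
      case False
      then obtain j' where j': "j' < s" "z \<in> \<Union>(Q j' \<union> (\<Union>i\<in>{..<r}. B' i j'))" using z(3) by blast
      show False
      proof (cases "z \<in> \<Union>(Q j')")
        case True
        obtain i' where i': "i' < r" "z = (i', j', en i' j')" using VQ[OF True j'(1)] by blast
        then have "x = en 0 j" using x by auto
        then show False using x(2) enA[OF r0 z(1)] ste[OF r0 z(1)] by auto
      next
        case False
        then obtain i' where i': "i' < r" "z \<in> \<Union>(B' i' j')" using j'(2) by blast
        obtain y where y: "z = (i', j', y)" "y \<in> \<Union>(B i' j')" "y \<noteq> st i' j'" using VB[OF i'(2) i'(1) j'(1)] by blast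
        have "i' = 0" "j' = j" "y = x" using x y by auto
        then show False using x(2) y ABd[OF r0 z(1)] stB[OF r0 z(1)] by auto
      qed
    qed
  qed
  have Dall: "Dn k S c ((\<Union>j\<in>{..<s}. A' 0 j) \<union> ((\<Union>i\<in>{1..<r}. ({} \<union> (\<Union>j\<in>{..<s}. A' i j))) \<union> (\<Union>j\<in>{..<s}. (Q j \<union> (\<Union>i\<in>{..<r}. B' i j)))))"
    by (rule Dn_glue'[OF DE0 DR _ ck]) (use E0R in blast)
  have eq1: "(\<Union>i<r. \<Union>j<s. image (glab famb i j) ` snd (path_graph (famb i j))) = (\<Union>i<r. \<Union>j<s. A' i j \<union> B' i j)"
  proof (intro SUP_cong refl)
    fix i j assume "i \<in> {..<r}" "j \<in> {..<s}"
    then have "snd (path_graph (famb i j)) = A i j \<union> B i j" using gsi unfolding good_split_def by simp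
    then show "image (glab famb i j) ` snd (path_graph (famb i j)) = A' i j \<union> B' i j"
      unfolding A'_def B'_def g_def by (simp add: image_Un)
  qed
  have eq2: "(\<Union>j<s. {{glab famb i j (path_end (famb i j)), glab famb i' j (path_end (famb i' j))} | i i'.
                 i < r \<and> i' < r \<and> {\<sigma> j i, \<sigma> j i'} \<in> snd H}) = (\<Union>j<s. Q j)"
    unfolding Q_def g_def en_def by simp
  have rr: "{..<r} = insert 0 {1..<r}" using r1 by auto
  have "snd (gadget famb H r s \<sigma>) = (\<Union>i<r. \<Union>j<s. A' i j \<union> B' i j) \<union> (\<Union>j<s. Q j)"
    unfolding gadget_def using eq1 eq2 by simp
  also have "\<dots> = (\<Union>j\<in>{..<s}. A' 0 j) \<union> ((\<Union>i\<in>{1..<r}. ({} \<union> (\<Union>j\<in>{..<s}. A' i j))) \<union> (\<Union>j\<in>{..<s}. (Q j \<union> (\<Union>i\<in>{..<r}. B' i j))))"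
    unfolding rr by blast
  finally show ?thesis using Dall by simp
qed

lemma gadget_Dn:
  fixes famb :: "nat \<Rightarrow> nat \<Rightarrow> 'a rgraph list" and H :: "'b graph"
  assumes split: "\<forall>i<r. \<forall>j<s. \<exists>A B. good_split k (famb i j) A B"
    and dH: "Dn k {} k (snd H)"
    and sig: "\<forall>j<s. bij_betw (\<sigma> j) {..<r} (fst H)"
    and r1: "1 \<le> r" and k1: "1 \<le> k"
  shows "Dn k {} k (snd (gadget famb H r s \<sigma>)) \<and> Dn k (gadget_base famb s) 1 (snd (gadget famb H r s \<sigma>))"
proof -
  define AB where "AB i j = (SOME x. good_split k (famb i j) (fst x) (snd x))" for i j
  have gs: "\<forall>i<r. \<forall>j<s. good_split k (famb i j) (fst (AB i j)) (snd (AB i j))"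
  proof (intro allI impI)
    fix i j assume "i < r" "j < s"
    then obtain A B where "good_split k (famb i j) A B" using split by blast
    then have "\<exists>x. good_split k (famb i j) (fst x) (snd x)" by (metis fst_conv snd_conv)
    then show "good_split k (famb i j) (fst (AB i j)) (snd (AB i j))" unfolding AB_def by (rule someI_ex)
  qed
  have d1: "Dn k {} k (snd (gadget famb H r s \<sigma>))"
  proof (rule gadget_Dn_gen[OF gs dH sig r1 le_refl])
    show "{} \<subseteq> gadget_base famb s" by simp
    show "\<forall>j<s. Dn k {} k (image (glab famb 0 j) ` fst (AB 0 j))"
    proof (intro allI impI)
      fix j assume "j < s"
      then have "Dn k {} k (fst (AB 0 j))" using gs r1 unfolding good_split_def by simp
      then show "Dn k {} k (image (glab famb 0 j) ` fst (AB 0 j))"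
        by (rule Dn_map_fwd) (use glab_inj inj_on_subset in blast)+
    qed
  qed
  have d2: "Dn k (gadget_base famb s) 1 (snd (gadget famb H r s \<sigma>))"
  proof (rule gadget_Dn_gen[OF gs dH sig r1 k1])
    show "gadget_base famb s \<subseteq> gadget_base famb s" by simp
    show "\<forall>j<s. Dn k (gadget_base famb s) 1 (image (glab famb 0 j) ` fst (AB 0 j))"
    proof (intro allI impI)
      fix j assume "j < s"
      then have "Dn k {path_start (famb 0 j)} 1 (fst (AB 0 j))" using gs r1 unfolding good_split_def by simp
      then show "Dn k (gadget_base famb s) 1 (image (glab famb 0 j) ` fst (AB 0 j))"
      proof (rule Dn_map_fwd)
        show "inj_on (glab famb 0 j) (\<Union>(fst (AB 0 j)))" using glab_inj inj_on_subset by blast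
        show "\<forall>x\<in>\<Union>(fst (AB 0 j)). glab famb 0 j x \<in> gadget_base famb s \<longrightarrow> x \<in> {path_start (famb 0 j)}"
          using glab_in_base by blast
      qed
    qed
  qed
  show ?thesis using d1 d2 by simp
qed

lemma Phi_ge:
  fixes F :: "'v graph" and n :: nat and C p :: real
  assumes D: "Dn k W c (snd F)" and fin: "finite (fst F)" and pw: "snd F \<subseteq> Pow (fst F)"
    and ne: "snd F \<noteq> {}" and k0: "0 < k" and C1: "C > 1" and pC: "p \<ge> C * real n powr (- 2 / real k)"
  shows "Phi n p F W \<ge> C * real n powr (real c / real k)"
proof -
  define M where "M = {real n ^ (card VH - card (VH \<inter> W)) * p ^ card EH | VH EH.
                        VH \<subseteq> fst F \<and> EH \<subseteq> snd F \<and> (\<forall>e\<in>EH. e \<subseteq> VH) \<and> card EH > 0}"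
  have finE: "finite (snd F)" using pw fin by (meson finite_Pow_iff finite_subset)
  have "M \<subseteq> (\<lambda>(VH, EH). real n ^ (card VH - card (VH \<inter> W)) * p ^ card EH) ` (Pow (fst F) \<times> Pow (snd F))"
    unfolding M_def by auto
  then have finM: "finite M" using fin finE by (meson finite_Pow_iff finite_SigmaI finite_imageI finite_subset)
  obtain e0 where e0: "e0 \<in> snd F" using ne by blast
  have "e0 \<subseteq> fst F" using e0 pw by blast
  then have "real n ^ (card e0 - card (e0 \<inter> W)) * p ^ card {e0} \<in> M"
    unfolding M_def using e0 by (intro CollectI exI[of _ e0] exI[of _ "{e0}"]) auto
  then have neM: "M \<noteq> {}" by blast
  have "C * real n powr (real c / real k) \<le> m" if mM: "m \<in> M" for m
  proof -
    obtain VH EH where m: "m = real n ^ (card VH - card (VH \<inter> W)) * p ^ card EH"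
      "VH \<subseteq> fst F" "EH \<subseteq> snd F" "\<forall>e\<in>EH. e \<subseteq> VH" "card EH > 0"
      using mM unfolding M_def by blast
    define a where "a = card VH - card (VH \<inter> W)"
    define e where "e = card EH"
    have finVH: "finite VH" using m(2) fin finite_subset by blast
    have a_eq: "a = card (VH - W)" unfolding a_def using finVH by (simp add: card_Diff_subset_Int)
    have "EH \<noteq> {}" using m(5) by auto
    then have "2 * e + c \<le> k * card (\<Union>EH - W)" using D m(3) unfolding Dn_def e_def by blast
    also have "card (\<Union>EH - W) \<le> card (VH - W)" using m(4) finVH by (intro card_mono) auto
    then have "k * card (\<Union>EH - W) \<le> k * a" using a_eq by simp
    finally have ka: "2 * e + c \<le> k * a" .
    have e1: "1 \<le> e" using m(5) e_def by simp
    show ?thesis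
    proof (cases "n = 0")
      case True
      have "p \<ge> 0" using pC True by simp
      then have "m \<ge> 0" using m(1) by simp
      then show ?thesis using True by simp
    next
      case False
      then have n1: "real n \<ge> 1" by simp
      have x0: "real n powr (- 2 / real k) > 0" using n1 by simp
      have pe: "p ^ e \<ge> (C * real n powr (- 2 / real k)) ^ e"
        by (rule power_mono[OF pC]) (use C1 x0 in simp)
      have "(C * real n powr (- 2 / real k)) ^ e = C ^ e * real n powr (real e * (- 2 / real k))"
        using n1 by (simp add: power_mult_distrib powr_power)
      also have "C ^ e \<ge> C" using C1 e1 by (metis less_imp_le power_increasing power_one_right)
      then have "C ^ e * real n powr (real e * (- 2 / real k)) \<ge> C * real n powr (real e * (- 2 / real k))"
        by (simp add: mult_right_mono)
      finally have pe2: "p ^ e \<ge> C * real n powr (real e * (- 2 / real k))" using pe by linarith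
      have na: "real n ^ a = real n powr real a" using n1 by (simp add: powr_realpow)
      have "m = real n ^ a * p ^ e" using m(1) a_def e_def by simp
      also have "\<dots> \<ge> real n ^ a * (C * real n powr (real e * (- 2 / real k)))"
        using pe2 n1 by (simp add: mult_left_mono)
      finally have "m \<ge> C * (real n powr real a * real n powr (real e * (- 2 / real k)))"
        using na by (simp add: algebra_simps)
      also have "real n powr real a * real n powr (real e * (- 2 / real k)) = real n powr (real a - 2 * real e / real k)"
        by (simp add: powr_add[symmetric] algebra_simps)
      finally have mge: "m \<ge> C * real n powr (real a - 2 * real e / real k)" .
      have "real (2 * e + c) \<le> real (k * a)" using ka by linarith
      then have "2 * real e + real c \<le> real k * real a" by simp
      then have "real c / real k \<le> real a - 2 * real e / real k" using k0
        by (simp add: field_simps)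
      then have "real n powr (real c / real k) \<le> real n powr (real a - 2 * real e / real k)"
        using n1 by (rule powr_mono)
      then have "C * real n powr (real c / real k) \<le> C * real n powr (real a - 2 * real e / real k)"
        using C1 by simp
      then show ?thesis using mge by linarith
    qed
  qed
  then have "C * real n powr (real c / real k) \<le> Min M" using finM neM by (simp add: Min_ge_iff)
  then show ?thesis unfolding Phi_def M_def by simp
qed

lemma Dn_addS:
  assumes "Dn k S c E" "\<Union>E \<inter> S' = {}"
  shows "Dn k (S \<union> S') c E"
  unfolding Dn_def
proof (intro conjI allI impI)
  show "finite (\<Union>E)" using assms(1) unfolding Dn_def by simp
  fix EH assume h: "EH \<subseteq> E" "EH \<noteq> {}"
  have "\<Union>EH - (S \<union> S') = \<Union>EH - S" using h(1) assms(2) by blast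
  then show "2 * card EH + c \<le> k * card (\<Union>EH - (S \<union> S'))" using assms(1) h unfolding Dn_def by simp
qed

lemma img_Dn:
  assumes "Dn k {} c E" "\<Union>(image g ` E) \<inter> S = {}" "inj g"
  shows "Dn k S c (image g ` E)"
proof -
  have "Dn k ({} \<union> S) c (image g ` E)"
  proof (rule Dn_addS)
    show "Dn k {} c (image g ` E)" using assms(1) by (rule Dn_map_fwd) (use assms(3) inj_on_subset in blast)+
  qed (use assms(2) in simp)
  then show ?thesis by simp
qed

lemma copy0_Dn:
  assumes E: "E \<subseteq> SP ps - {{a,b}}" and pk: "\<forall>p<length ps. ps ! p \<le> k"
    and ab: "a \<noteq> b" "a \<in> fst (complete_multipartite ps)" "b \<in> fst (complete_multipartite ps)" "fst a = fst b"
    and k2: "2 \<le> k"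
  shows "Dn k {a} 1 E"
proof -
  have ESP: "E \<subseteq> SP ps" using E by blast
  have pa: "fst a < length ps" using ab(2) unfolding fst_cm by auto
  have d1: "Dn k {a} 1 (pe E (fst a))"
    by (rule pe_block1[OF E _ ab(1-3) refl ab(4)[symmetric] k2]) (use pk pa in simp)
  have dd: "Dn k {} k (E - pe E (fst a))" using all_block[OF ESP pk] by (rule Dn_subset) blast
  have vr: "\<Union>(E - pe E (fst a)) \<subseteq> {z. fst z \<noteq> fst a}"
  proof
    fix z assume "z \<in> \<Union>(E - pe E (fst a))"
    then obtain e where e: "z \<in> e" "e \<in> E" "e \<notin> pe E (fst a)" by blast
    have "e \<in> SP ps" using e(2) ESP by blast
    then obtain x y where xy: "e = {x,y}" "fst x = fst y" unfolding SP_def by blast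
    have "fst x \<noteq> fst a"
    proof
      assume "fst x = fst a"
      then have "\<forall>z\<in>e. fst z = fst a" using xy by simp
      then have "e \<in> pe E (fst a)" using e(2) unfolding pe_def by simp
      then show False using e(3) by simp
    qed
    then show "z \<in> {z. fst z \<noteq> fst a}" using xy e(1) by auto
  qed
  have "\<Union>(E - pe E (fst a)) \<inter> {a} = {}" using vr by blast
  then have "Dn k ({} \<union> {a}) k (E - pe E (fst a))" by (rule Dn_addS[OF dd])
  then have "Dn k {a} k (E - pe E (fst a))" by simp
  then have d2: "Dn k {a} 1 (E - pe E (fst a))" by (rule Dn_mono_c) (use k2 in linarith)
  have "\<Union>(pe E (fst a)) \<inter> \<Union>(E - pe E (fst a)) = {}" using vr pe_vert[of E "fst a"] by blast
  then have "Dn k {a} 1 (pe E (fst a) \<union> (E - pe E (fst a)))" by (rule Dn_disj[OF d1 d2])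
  moreover have "pe E (fst a) \<union> (E - pe E (fst a)) = E" unfolding pe_def by blast
  ultimately show ?thesis by simp
qed

definition CE :: "'a rgraph list \<Rightarrow> nat \<Rightarrow> (nat \<times> 'a) set set" where
  "CE hs l = image (path_lab hs l) ` snd (fst (hs ! l))"

lemma path_edges: "snd (path_graph hs) = (\<Union>l<length hs. CE hs l)"
  unfolding path_graph_def CE_def by simp

lemma PV:
  assumes "w \<in> \<Union>(image (path_lab hs l) ` E)"
  shows "(\<exists>z\<in>\<Union>E. w = (l, z)) \<or> (w = (Suc l, fst (snd (hs ! Suc l))) \<and> snd (snd (hs ! l)) \<in> \<Union>E)"
proof -
  obtain z where z: "z \<in> \<Union>E" "w = path_lab hs l z" using assms by blast
  show ?thesis using path_lab_cases[of hs l z] z by auto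
qed

lemma PV1: "w \<in> \<Union>(image (path_lab hs l) ` E) \<Longrightarrow> fst w = l \<or> fst w = Suc l"
  using PV[of w hs l E] by auto

lemma CE_range: "\<Union>(CE hs l) \<subseteq> range (path_lab hs l)"
  unfolding CE_def by blast

lemma img_range: "\<Union>(image (path_lab hs l) ` E) \<subseteq> range (path_lab hs l)"
  by blast

lemma edge_part_other:
  assumes "E \<subseteq> SP ps" "z \<in> \<Union>(E - pe E p)"
  shows "fst z \<noteq> p"
proof -
  obtain e where e: "z \<in> e" "e \<in> E" "e \<notin> pe E p" using assms(2) by blast
  have "e \<in> SP ps" using e(2) assms(1) by blast
  then obtain x y where xy: "e = {x,y}" "fst x = fst y" unfolding SP_def by blast
  have "fst x \<noteq> p"
  proof
    assume "fst x = p"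
    then have "\<forall>z\<in>e. fst z = p" using xy by simp
    then have "e \<in> pe E p" using e(2) unfolding pe_def by simp
    then show False using e(3) by simp
  qed
  then show ?thesis using xy e(1) by auto
qed

lemma split_generic:
  fixes hs :: "(nat \<times> nat) rgraph list"
  assumes m1: "1 \<le> m" and mt: "Suc m < length hs"
    and Dl: "\<forall>l<length hs. Dn k {} k (snd (fst (hs ! l)))"
    and D0: "Dn k {fst (snd (hs ! 0))} 1 (snd (fst (hs ! 0)))"
    and Em: "snd (fst (hs ! m)) \<subseteq> SP psm"
    and abm: "fst (fst (snd (hs ! m))) \<noteq> fst (snd (snd (hs ! m)))"
    and k1: "1 \<le> k"
  shows "\<exists>A B. good_split k hs A B"
proof -
  define t where "t = length hs"
  define pa where "pa = fst (fst (snd (hs ! m)))"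
  define E where "E = snd (fst (hs ! m))"
  define EA where "EA = pe E pa"
  define EB where "EB = E - EA"
  define g where "g = path_lab hs m"
  define A where "A = (\<Union>l<m. CE hs l) \<union> image g ` EA"
  define B where "B = image g ` EB \<union> (\<Union>l\<in>{Suc m..<t}. CE hs l)"
  have ESP: "E \<subseteq> SP psm" using Em unfolding E_def .
  have ginj: "inj g" unfolding g_def by (rule path_lab_inj)
  have dCE: "Dn k {} k (CE hs l)" if "l < t" for l
    unfolding CE_def by (rule img_Dn) (use Dl that t_def path_lab_inj in auto)
  have CEm: "CE hs m = image g ` EA \<union> image g ` EB"
    unfolding CE_def g_def EA_def EB_def E_def pe_def by blast
  have tt: "{..<t} = {..<m} \<union> {m} \<union> {Suc m..<t}" using mt t_def by auto
  have eqAB: "snd (path_graph hs) = A \<union> B"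
    unfolding path_edges t_def[symmetric] tt A_def B_def using CEm by auto
  have VAb: "fst w < m \<or> (fst w = m \<and> fst (snd w) = pa)" if "w \<in> \<Union>A" for w
  proof (cases "w \<in> \<Union>(\<Union>l<m. CE hs l)")
    case True
    then obtain l where l: "l < m" "w \<in> \<Union>(CE hs l)" by force
    from PV[OF l(2)[unfolded CE_def]] show ?thesis
    proof
      assume "\<exists>z\<in>\<Union>(snd (fst (hs ! l))). w = (l, z)"
      then show ?thesis using l(1) by auto
    next
      assume "w = (Suc l, fst (snd (hs ! Suc l))) \<and> snd (snd (hs ! l)) \<in> \<Union>(snd (fst (hs ! l)))"
      then show ?thesis using l(1) pa_def by (cases "Suc l = m") auto
    qed
  next
    case False
    then have w: "w \<in> \<Union>(image g ` EA)" using that unfolding A_def by blast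
    from PV[OF w[unfolded g_def]] show ?thesis
    proof
      assume "\<exists>z\<in>\<Union>EA. w = (m, z)"
      then obtain z where "z \<in> \<Union>EA" "w = (m,z)" by blast
      then show ?thesis using pe_vert[of E pa] unfolding EA_def by auto
    next
      assume h: "w = (Suc m, fst (snd (hs ! Suc m))) \<and> snd (snd (hs ! m)) \<in> \<Union>EA"
      then have "fst (snd (snd (hs ! m))) = pa" using pe_vert[of E pa] unfolding EA_def by auto
      then show ?thesis using abm pa_def by simp
    qed
  qed
  have VBb: "fst w > m \<or> (fst w = m \<and> fst (snd w) \<noteq> pa)" if "w \<in> \<Union>B" for w
  proof (cases "w \<in> \<Union>(image g ` EB)")
    case True
    from PV[OF True[unfolded g_def]] show ?thesis
    proof
      assume "\<exists>z\<in>\<Union>EB. w = (m, z)"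
      then obtain z where z: "z \<in> \<Union>EB" "w = (m,z)" by blast
      have "fst z \<noteq> pa" using edge_part_other[OF ESP] z(1) unfolding EB_def EA_def by blast
      then show ?thesis using z by simp
    next
      assume "w = (Suc m, fst (snd (hs ! Suc m))) \<and> snd (snd (hs ! m)) \<in> \<Union>EB"
      then show ?thesis by simp
    qed
  next
    case False
    then have "w \<in> \<Union>(\<Union>l\<in>{Suc m..<t}. CE hs l)" using that unfolding B_def by blast
    then obtain e where e: "w \<in> e" "e \<in> (\<Union>l\<in>{Suc m..<t}. CE hs l)" by (rule UnionE)
    from e(2) obtain l where l0: "l \<in> {Suc m..<t}" "e \<in> CE hs l" by (rule UN_E)
    have l: "l \<in> {Suc m..<t}" "w \<in> \<Union>(CE hs l)" using l0 e(1) by blast+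
    have "fst w = l \<or> fst w = Suc l" using PV1[OF l(2)[unfolded CE_def]] .
    moreover have "m < l" using l(1) by simp
    ultimately show ?thesis by linarith
  qed
  have disj: "\<Union>A \<inter> \<Union>B = {}"
  proof (rule ccontr)
    assume "\<Union>A \<inter> \<Union>B \<noteq> {}"
    then obtain w where "w \<in> \<Union>A" "w \<in> \<Union>B" by blast
    from VAb[OF this(1)] VBb[OF this(2)] show False by auto
  qed
  have endA: "path_end hs \<notin> \<Union>A"
  proof
    assume "path_end hs \<in> \<Union>A"
    from VAb[OF this] show False using mt unfolding path_end_def by auto
  qed
  have startB: "path_start hs \<notin> \<Union>B"
  proof
    assume "path_start hs \<in> \<Union>B"
    from VBb[OF this] show False using m1 unfolding path_start_def by auto
  qed
  define Y where "Y l = (if l < m then CE hs l else if l = m then image g ` EA else {})" for l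
  have YA: "(\<Union>l\<in>{0..<Suc m}. Y l) = A"
  proof -
    have "(\<Union>l\<in>{0..<Suc m}. Y l) = Y m \<union> (\<Union>l\<in>{..<m}. Y l)"
      by (simp add: atLeast0LessThan lessThan_Suc)
    also have "(\<Union>l\<in>{..<m}. Y l) = (\<Union>l<m. CE hs l)" by (rule SUP_cong) (auto simp: Y_def)
    finally show ?thesis unfolding A_def Y_def by auto
  qed
  have YR: "\<forall>l. \<Union>(Y l) \<subseteq> range (path_lab hs l)"
  proof
    fix l show "\<Union>(Y l) \<subseteq> range (path_lab hs l)"
      unfolding Y_def g_def using CE_range[of hs l] img_range[of hs l EA] by auto
  qed
  have dE: "Dn k {} k E" using Dl mt unfolding E_def by simp
  have dEA: "Dn k {} k EA" by (rule Dn_subset[OF dE]) (unfold EA_def pe_def, blast)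
  have DA1: "Dn k {} k A"
  proof -
    have "Dn k {} k (\<Union>l\<in>{0..<Suc m}. Y l)"
    proof (rule Dn_path_seq[OF _ le_refl _ YR])
      have "0 < t" using mt unfolding t_def by linarith
      then show "Dn k {} k (Y 0)" using dCE[of 0] m1 unfolding Y_def by simp
      show "\<forall>l. 0 < l \<longrightarrow> Dn k {} k (Y l)"
      proof (intro allI impI)
        fix l :: nat assume "0 < l"
        show "Dn k {} k (Y l)"
        proof (cases "l < m")
          case True
          then have "l < t" using mt t_def by simp
          then show ?thesis using dCE[of l] True unfolding Y_def by simp
        next
          case False
          show ?thesis
          proof (cases "l = m")
            case True
            have "Dn k {} k (image g ` EA)" by (rule img_Dn[OF dEA _ ginj]) simp
            then show ?thesis using True unfolding Y_def by simp
          next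
            case False
            then show ?thesis using \<open>\<not> l < m\<close> unfolding Y_def by (simp add: Dn_empty)
          qed
        qed
      qed
    qed
    then show ?thesis using YA by simp
  qed
  have DA2: "Dn k {path_start hs} 1 A"
  proof -
    have "Dn k {path_start hs} 1 (\<Union>l\<in>{0..<Suc m}. Y l)"
    proof (rule Dn_path_seq[OF _ k1 _ YR])
      have "Dn k {path_start hs} 1 (CE hs 0)"
        unfolding CE_def
      proof (rule Dn_map_fwd[OF D0])
        show "inj_on (path_lab hs 0) (\<Union>(snd (fst (hs ! 0))))" by (rule inj_on_subset[OF path_lab_inj]) simp
        show "\<forall>x\<in>\<Union>(snd (fst (hs ! 0))). path_lab hs 0 x \<in> {path_start hs} \<longrightarrow> x \<in> {fst (snd (hs ! 0))}"
        proof (intro ballI impI)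
          fix x assume h0: "path_lab hs 0 x \<in> {path_start hs}"
          then have "fst (path_lab hs 0 x) = 0" unfolding path_start_def by simp
          then have "path_lab hs 0 x = (0, x)" using path_lab_cases[of hs 0 x] by auto
          then show "x \<in> {fst (snd (hs ! 0))}" using h0 unfolding path_start_def by simp
        qed
      qed
      then show "Dn k {path_start hs} 1 (Y 0)" using m1 unfolding Y_def by simp
      show "\<forall>l. 0 < l \<longrightarrow> Dn k {path_start hs} k (Y l)"
      proof (intro allI impI)
        fix l :: nat assume l0: "0 < l"
        have nst: "\<Union>(image (path_lab hs l) ` E') \<inter> {path_start hs} = {}" for E'
        proof -
          have "path_start hs \<notin> \<Union>(image (path_lab hs l) ` E')"
          proof
            assume "path_start hs \<in> \<Union>(image (path_lab hs l) ` E')"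
            from PV1[OF this] have "fst (path_start hs) = l \<or> fst (path_start hs) = Suc l" .
            then show False using l0 unfolding path_start_def by auto
          qed
          then show ?thesis by (simp add: disjoint_iff)
        qed
        show "Dn k {path_start hs} k (Y l)"
        proof (cases "l < m")
          case True
          have "Dn k {} k (snd (fst (hs ! l)))" using Dl True mt by simp
          then have "Dn k {path_start hs} k (image (path_lab hs l) ` snd (fst (hs ! l)))"
            by (rule img_Dn[OF _ nst path_lab_inj])
          then show ?thesis using True unfolding Y_def CE_def by simp
        next
          case False
          show ?thesis
          proof (cases "l = m")
            case True
            have "Dn k {path_start hs} k (image (path_lab hs l) ` EA)"
              by (rule img_Dn[OF dEA nst path_lab_inj])
            then show ?thesis using True unfolding Y_def g_def by simp
          next
            case False
            then show ?thesis using \<open>\<not> l < m\<close> unfolding Y_def by (simp add: Dn_empty)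
          qed
        qed
      qed
    qed
    then show ?thesis using YA by simp
  qed
  define Z where "Z l = (if l = m then image g ` EB else if l < t then CE hs l else {})" for l
  have ZB: "(\<Union>l\<in>{m..<t}. Z l) = B"
  proof -
    have "{m..<t} = insert m {Suc m..<t}" using mt t_def by auto
    then have "(\<Union>l\<in>{m..<t}. Z l) = Z m \<union> (\<Union>l\<in>{Suc m..<t}. Z l)" by simp
    also have "(\<Union>l\<in>{Suc m..<t}. Z l) = (\<Union>l\<in>{Suc m..<t}. CE hs l)" by (rule SUP_cong) (auto simp: Z_def)
    finally show ?thesis unfolding B_def Z_def by simp
  qed
  have ZR: "\<forall>l. \<Union>(Z l) \<subseteq> range (path_lab hs l)"
  proof
    fix l show "\<Union>(Z l) \<subseteq> range (path_lab hs l)"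
      unfolding Z_def g_def using CE_range[of hs l] img_range[of hs l EB] by auto
  qed
  have dEB: "Dn k {} k EB" by (rule Dn_subset[OF dE]) (unfold EB_def, blast)
  have DB: "Dn k {} k B"
  proof -
    have "Dn k {} k (\<Union>l\<in>{m..<t}. Z l)"
    proof (rule Dn_path_seq[OF _ le_refl _ ZR])
      show "Dn k {} k (Z m)" unfolding Z_def by (simp add: img_Dn[OF dEB _ ginj])
      show "\<forall>l. m < l \<longrightarrow> Dn k {} k (Z l)"
      proof (intro allI impI)
        fix l assume "m < l"
        show "Dn k {} k (Z l)"
        proof (cases "l < t")
          case True then show ?thesis using dCE \<open>m < l\<close> unfolding Z_def by simp
        next
          case False
          then show ?thesis using \<open>m < l\<close> unfolding Z_def by (simp add: Dn_empty)
        qed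
      qed
    qed
    then show ?thesis using ZB by simp
  qed
  show ?thesis
    unfolding good_split_def using eqAB disj endA startB DA1 DA2 DB mt by auto
qed

lemma rstar_bounds:
  assumes "0 < k" "1 \<le> r"
  shows "k * (rstar r k - 1) < r" "r \<le> k * rstar r k" "1 \<le> rstar r k"
proof -
  define c where "c = \<lceil>real r / real k\<rceil>"
  have kp: "(0::real) < real k" using assms by simp
  have up: "real r \<le> of_int c * real k" unfolding c_def by (rule ceiling_divide_upper[OF kp])
  have lo: "(of_int c - 1) * real k < real r" unfolding c_def by (rule ceiling_divide_lower[OF kp])
  have "real r / real k > 0" using assms by simp
  then have "0 < c" unfolding c_def by simp
  then have c1: "c \<ge> 1" by simp
  have rs: "real (rstar r k) = of_int c" unfolding rstar_def c_def[symmetric] using c1 by simp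
  show "1 \<le> rstar r k" using rs c1 by linarith
  have "real r \<le> real (rstar r k) * real k" using up rs by simp
  then have "real r \<le> real (k * rstar r k)" by (simp add: mult.commute)
  then show "r \<le> k * rstar r k" by linarith
  have "real (rstar r k - 1) = of_int c - 1" using rs c1 \<open>1 \<le> rstar r k\<close> by (simp add: of_nat_diff)
  then have "real (rstar r k - 1) * real k < real r" using lo by simp
  then have "real (k * (rstar r k - 1)) < real r" by (simp add: mult.commute)
  then show "k * (rstar r k - 1) < r" by linarith
qed

lemma qq_bounds:
  assumes "0 < k" "1 \<le> r"
  shows "1 \<le> qq r k" "qq r k \<le> k" "\<not> k dvd r \<Longrightarrow> qq r k < k"
proof -
  note b = rstar_bounds[OF assms]
  show "1 \<le> qq r k" unfolding qq_def using b(1) by simp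
  have e: "k * rstar r k = k * (rstar r k - 1) + k" using b(3)
    by (metis Suc_diff_1 less_le_trans mult_Suc_right zero_less_one add.commute)
  then show "qq r k \<le> k" unfolding qq_def using b(2) by linarith
  assume nd: "\<not> k dvd r"
  show "qq r k < k"
  proof (rule ccontr)
    assume "\<not> qq r k < k"
    then have "qq r k = k" using \<open>qq r k \<le> k\<close> by simp
    then have "r = k * rstar r k" using e b(1) unfolding qq_def by linarith
    then show False using nd by (metis dvd_triv_left)
  qed
qed

lemma rstar_ge3:
  assumes "0 < k" "2 * k < r" shows "3 \<le> rstar r k"
proof -
  have "r \<le> k * rstar r k" using rstar_bounds(2)[OF assms(1)] assms(2) by simp
  then have "2 * k < k * rstar r k" using assms(2) by linarith
  then have "2 < rstar r k" by (metis mult.commute mult_less_cancel2)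
  then show ?thesis by simp
qed

lemma rcompl_cm_sub: "snd (fst (rcompl (complete_multipartite ps, a, b))) \<subseteq> SP ps - {{a,b}}"
  by (rule rcompl_sub) auto

lemma Dn_rcompl_cm:
  assumes "\<forall>p<length ps. ps ! p \<le> k"
  shows "Dn k {} k (snd (fst (rcompl (complete_multipartite ps, a, b))))"
  using rcompl_cm_sub[of ps a b] assms by (intro all_block) auto

lemma gcompl_sub: "snd (gcompl (complete_multipartite ps)) \<subseteq> SP ps"
proof
  fix e assume "e \<in> snd (gcompl (complete_multipartite ps))"
  then have "e \<in> {{x, y} |x y. x \<in> fst (complete_multipartite ps) \<and> y \<in> fst (complete_multipartite ps)
      \<and> x \<noteq> y \<and> {x, y} \<notin> snd (complete_multipartite ps)}" unfolding gcompl_def by simp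
  then obtain x y where e: "e = {x,y}" "x \<in> fst (complete_multipartite ps)" "y \<in> fst (complete_multipartite ps)"
    "x \<noteq> y" "{x,y} \<notin> snd (complete_multipartite ps)" by blast
  have "fst x = fst y"
  proof (rule ccontr)
    assume "fst x \<noteq> fst y"
    then have "{x,y} \<in> snd (complete_multipartite ps)" using e unfolding snd_cm by blast
    then show False using e by blast
  qed
  then show "e \<in> SP ps" using e unfolding SP_def by blast
qed

lemma Hdet_parts:
  assumes "0 < k" "1 \<le> r"
  shows "\<forall>p<length (replicate (rstar r k - 1) k @ [qq r k]). (replicate (rstar r k - 1) k @ [qq r k]) ! p \<le> k"
proof (intro allI impI)
  fix p assume "p < length (replicate (rstar r k - 1) k @ [qq r k])"
  then show "(replicate (rstar r k - 1) k @ [qq r k]) ! p \<le> k"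
    using qq_bounds(2)[OF assms] by (cases "p < rstar r k - 1") (auto simp: nth_append)
qed

lemma Dn_Hdet:
  assumes "0 < k" "1 \<le> r"
  shows "Dn k {} k (snd (gcompl (Hdet r k)))"
  unfolding Hdet_def using gcompl_sub Hdet_parts[OF assms] by (rule all_block)

lemma Hdet_edge:
  assumes "2 \<le> k" "k \<le> r"
  shows "{(0,0),(0,1)} \<in> snd (gcompl (Hdet r k))" "(0,0) \<in> fst (gcompl (Hdet r k))" "(0,1) \<in> fst (gcompl (Hdet r k))"
proof -
  define ps where "ps = replicate (rstar r k - 1) k @ [qq r k]"
  have k0: "0 < k" "1 \<le> r" using assms by auto
  have p0: "2 \<le> ps ! 0"
  proof (cases "rstar r k - 1 = 0")
    case True
    then have "rstar r k = 1" using rstar_bounds(3)[OF k0] by simp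
    then have "qq r k = r" unfolding qq_def by simp
    then show ?thesis using True assms unfolding ps_def by simp
  next
    case False
    then show ?thesis using assms unfolding ps_def by (simp add: nth_append)
  qed
  have lp: "0 < length ps" unfolding ps_def by simp
  have V: "(0,0) \<in> fst (complete_multipartite ps)" "(0,1) \<in> fst (complete_multipartite ps)"
    using p0 lp unfolding fst_cm by auto
  have "{(0::nat,0::nat),(0,1)} \<notin> snd (complete_multipartite ps)"
    unfolding snd_cm by (auto simp: doubleton_eq_iff)
  then have "{(0::nat,0::nat),(0,1)} \<in> snd (gcompl (complete_multipartite ps))"
    using V unfolding gcompl_def by auto
  then show "{(0,0),(0,1)} \<in> snd (gcompl (Hdet r k))" unfolding Hdet_def ps_def .
  show "(0,0) \<in> fst (gcompl (Hdet r k))" "(0,1) \<in> fst (gcompl (Hdet r k))"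
    using V unfolding Hdet_def ps_def gcompl_def by simp_all
qed

lemma path_Dn_all:
  assumes "\<forall>l<length hs. Dn k {} k (snd (fst (hs ! l)))"
  shows "Dn k {} k (snd (path_graph hs))"
proof -
  define Y where "Y l = (if l < length hs then CE hs l else {})" for l
  have dY: "Dn k {} k (Y l)" for l
  proof (cases "l < length hs")
    case True
    have "Dn k {} k (image (path_lab hs l) ` snd (fst (hs ! l)))"
      by (rule img_Dn[OF _ _ path_lab_inj]) (use assms True in auto)
    then show ?thesis using True unfolding Y_def CE_def by simp
  next
    case False then show ?thesis unfolding Y_def by (simp add: Dn_empty)
  qed
  have YR: "\<forall>l. \<Union>(Y l) \<subseteq> range (path_lab hs l)"
  proof
    fix l show "\<Union>(Y l) \<subseteq> range (path_lab hs l)" unfolding Y_def using CE_range[of hs l] by simp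
  qed
  have "Dn k {} k (\<Union>l\<in>{0..<length hs}. Y l)"
    by (rule Dn_path_seq[OF dY le_refl _ YR]) (use dY in blast)
  moreover have "(\<Union>l\<in>{0..<length hs}. Y l) = snd (path_graph hs)"
    unfolding path_edges Y_def by (simp add: atLeast0LessThan)
  ultimately show ?thesis by simp
qed

lemma end_in:
  assumes "1 \<le> length hs" "snd (snd (last hs)) \<in> fst (fst (last hs))"
  shows "path_end hs \<in> fst (path_graph hs)"
proof -
  define l where "l = length hs - 1"
  have ne: "hs \<noteq> []" using assms(1) by auto
  have l: "l < length hs" "last hs = hs ! l" using assms(1) last_conv_nth[OF ne] unfolding l_def by auto
  have nl: "\<not> Suc l < length hs" using assms(1) unfolding l_def by simp
  have "path_lab hs l (snd (snd (last hs))) = (l, snd (snd (last hs)))"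
    using nl unfolding path_lab_def by simp
  moreover have "path_end hs = (l, snd (snd (last hs)))" unfolding path_end_def l_def by simp
  ultimately have "path_end hs = path_lab hs l (snd (snd (hs ! l)))" using l by simp
  moreover have "snd (snd (hs ! l)) \<in> fst (fst (hs ! l))" using assms(2) l by simp
  ultimately show ?thesis unfolding path_graph_def using l(1) by auto
qed

lemma isolated_SP:
  assumes "ps ! p = 1"
  shows "(p, 0) \<notin> \<Union>(SP ps)"
proof
  assume "(p, 0) \<in> \<Union>(SP ps)"
  then obtain e where e: "(p,0) \<in> e" "e \<in> SP ps" by blast
  then obtain x y where xy: "e = {x,y}" "x \<in> fst (complete_multipartite ps)"
    "y \<in> fst (complete_multipartite ps)" "x \<noteq> y" "fst x = fst y" unfolding SP_def by blast
  have "x = (p,0) \<or> y = (p,0)" using e xy by auto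
  then show False using xy assms unfolding fst_cm by auto
qed

lemma case1_split:
  assumes k2: "2 \<le> k" and dv: "k dvd r" and kr: "k \<le> r"
  shows "\<exists>A B. good_split k (map rcompl [H1 r k, H1' r k]) A B"
    "path_end (map rcompl [H1 r k, H1' r k]) \<in> fst (path_graph (map rcompl [H1 r k, H1' r k]))"
proof -
  define m where "m = r div k"
  define ps where "ps = replicate m k @ [1]"
  define G where "G = complete_multipartite ps"
  have m1: "1 \<le> m" unfolding m_def using k2 kr by (simp add: div_le_mono Suc_le_eq div_greater_zero_iff)
  have H1e: "H1 r k = ((fst G, snd G - {{(m,0),(0,0)}}), (m,0), (0,0))"
    unfolding H1_def G_def ps_def m_def Let_def by simp
  have H1'e: "H1' r k = ((fst G, snd G - {{(m,0),(0,0)}}), (0,0), (m,0))"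
    unfolding H1'_def H1e by simp
  define hs where "hs = map rcompl [H1 r k, H1' r k]"
  have pk: "\<forall>p<length ps. ps ! p \<le> k" unfolding ps_def using k2 by (auto simp: nth_append)
  have S0: "snd (fst (hs ! 0)) \<subseteq> SP ps - {{(m,0),(0,0)}}"
    unfolding hs_def H1e by simp (rule rcompl_sub, auto simp: G_def)
  have S1: "snd (fst (hs ! 1)) \<subseteq> SP ps - {{(0,0),(m,0)}}"
    unfolding hs_def H1'e by simp (rule rcompl_sub, auto simp: G_def insert_commute)
  have D: "\<forall>l<length hs. Dn k {} k (snd (fst (hs ! l)))"
  proof (intro allI impI)
    fix l assume "l < length hs"
    then have "l = 0 \<or> l = 1" unfolding hs_def by auto
    have d0: "Dn k {} k (snd (fst (hs ! 0)))" by (rule all_block[OF _ pk]) (use S0 in blast)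
    have d1: "Dn k {} k (snd (fst (hs ! 1)))" by (rule all_block[OF _ pk]) (use S1 in blast)
    show "Dn k {} k (snd (fst (hs ! l)))" using \<open>l = 0 \<or> l = 1\<close> d0 d1 by blast
  qed
  have DB: "Dn k {} k (snd (path_graph hs))" by (rule path_Dn_all[OF D])
  have pm: "ps ! m = 1" unfolding ps_def by (simp add: nth_append)
  have st: "path_start hs = (0, (m, 0))" unfolding path_start_def hs_def H1e rcompl_def by simp
  have nst: "path_start hs \<notin> \<Union>(snd (path_graph hs))"
  proof
    assume "path_start hs \<in> \<Union>(snd (path_graph hs))"
    then have "path_start hs \<in> \<Union>(\<Union>l<length hs. CE hs l)" unfolding path_edges .
    then obtain e where e: "path_start hs \<in> e" "e \<in> (\<Union>l<length hs. CE hs l)" by (rule UnionE)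
    from e(2) obtain l where l0: "l \<in> {..<length hs}" "e \<in> CE hs l" by (rule UN_E)
    have l: "l < 2" "path_start hs \<in> \<Union>(CE hs l)" using l0 e(1) unfolding hs_def by auto
    show False
    proof (cases "l = 0")
      case True
      from PV[OF l(2)[unfolded CE_def True]] show False
      proof
        assume "\<exists>z\<in>\<Union>(snd (fst (hs ! 0))). path_start hs = (0, z)"
        then have "(m,0) \<in> \<Union>(snd (fst (hs ! 0)))" using st by auto
        then have "(m,0) \<in> \<Union>(SP ps)" using S0 by blast
        then show False using isolated_SP[OF pm] by simp
      next
        assume "path_start hs = (Suc 0, fst (snd (hs ! Suc 0))) \<and> snd (snd (hs ! 0)) \<in> \<Union>(snd (fst (hs ! 0)))"
        then show False using st by simp
      qed
    next
      case False
      then have "l = 1" using l(1) by simp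
      then show False using PV1[OF l(2)[unfolded CE_def]] st by simp
    qed
  qed
  have "good_split k hs {} (snd (path_graph hs))"
    unfolding good_split_def using DB nst by (simp add: Dn_empty hs_def)
  then show "\<exists>A B. good_split k (map rcompl [H1 r k, H1' r k]) A B" unfolding hs_def by blast
  have "snd (snd (last hs)) \<in> fst (fst (last hs))"
    unfolding hs_def H1'e rcompl_def G_def using m1 by (simp add: fst_cm ps_def nth_append)
  then show "path_end (map rcompl [H1 r k, H1' r k]) \<in> fst (path_graph (map rcompl [H1 r k, H1' r k]))"
    using end_in[of hs] unfolding hs_def by simp
qed

lemma case2_split:
  assumes k2: "2 \<le> k" and nd: "\<not> k dvd r" and kr: "2 * k < r"
  shows "\<exists>A B. good_split k (map rcompl [H0_2 r k, H0'_2 r k, H0'_2 r k, H0_2 r k]) A B"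
    "path_end (map rcompl [H0_2 r k, H0'_2 r k, H0'_2 r k, H0_2 r k])
      \<in> fst (path_graph (map rcompl [H0_2 r k, H0'_2 r k, H0'_2 r k, H0_2 r k]))"
proof -
  define P where "P = rstar r k - 1"
  define ps where "ps = replicate P k @ [qq r k + 1]"
  define hs where "hs = map rcompl [H0_2 r k, H0'_2 r k, H0'_2 r k, H0_2 r k]"
  have k0: "0 < k" "1 \<le> r" using k2 kr by auto
  have q1: "1 \<le> qq r k" "qq r k < k" using qq_bounds[OF k0] nd by auto
  have P2: "2 \<le> P" using rstar_ge3[OF k0(1) kr] unfolding P_def by simp
  have H0: "H0_2 r k = (complete_multipartite ps, (P, 0), (P, 1))" unfolding H0_2_def ps_def P_def by simp
  have H0': "H0'_2 r k = (complete_multipartite ps, (0, 0), (1, 0))" unfolding H0'_2_def ps_def P_def by simp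
  have pk: "\<forall>p<length ps. ps ! p \<le> k" unfolding ps_def using q1 by (auto simp: nth_append)
  have lps: "length ps = Suc P" unfolding ps_def by simp
  have psP: "ps ! P = qq r k + 1" unfolding ps_def by (simp add: nth_append)
  have Vab: "(P,0) \<in> fst (complete_multipartite ps)" "(P,1) \<in> fst (complete_multipartite ps)"
    using lps psP q1 unfolding fst_cm by auto
  have hs0: "hs ! 0 = rcompl (complete_multipartite ps, (P, 0), (P, 1))" unfolding hs_def H0 by simp
  have hs1: "hs ! 1 = rcompl (complete_multipartite ps, (0, 0), (1, 0))" unfolding hs_def H0' by simp
  have Dl: "\<forall>l<length hs. Dn k {} k (snd (fst (hs ! l)))"
  proof (intro allI impI)
    fix l assume "l < length hs"
    then have "l = 0 \<or> l = 1 \<or> l = 2 \<or> l = 3" unfolding hs_def by auto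
    moreover have "Dn k {} k (snd (fst (rcompl (complete_multipartite ps, a, b))))" for a b
      by (rule Dn_rcompl_cm[OF pk])
    ultimately show "Dn k {} k (snd (fst (hs ! l)))" unfolding hs_def H0 H0' by auto
  qed
  have D0: "Dn k {fst (snd (hs ! 0))} 1 (snd (fst (hs ! 0)))"
  proof -
    have "Dn k {(P,0)} 1 (snd (fst (rcompl (complete_multipartite ps, (P, 0), (P, 1)))))"
      by (rule copy0_Dn[OF rcompl_cm_sub pk _ Vab _ k2]) simp_all
    then show ?thesis unfolding hs0 rcompl_def by simp
  qed
  have Em: "snd (fst (hs ! 1)) \<subseteq> SP ps" unfolding hs1 using rcompl_cm_sub by blast
  have abm: "fst (fst (snd (hs ! 1))) \<noteq> fst (snd (snd (hs ! 1)))" unfolding hs1 rcompl_def by simp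
  have "\<exists>A B. good_split k hs A B"
    by (rule split_generic[OF _ _ Dl D0 Em abm]) (use k2 in \<open>simp_all add: hs_def\<close>)
  then show "\<exists>A B. good_split k (map rcompl [H0_2 r k, H0'_2 r k, H0'_2 r k, H0_2 r k]) A B"
    unfolding hs_def .
  have "snd (snd (last hs)) \<in> fst (fst (last hs))"
    unfolding hs_def H0 rcompl_def using Vab by simp
  then show "path_end (map rcompl [H0_2 r k, H0'_2 r k, H0'_2 r k, H0_2 r k])
      \<in> fst (path_graph (map rcompl [H0_2 r k, H0'_2 r k, H0'_2 r k, H0_2 r k]))"
    using end_in[of hs] unfolding hs_def by simp
qed

lemma case3_split:
  assumes k2: "2 \<le> k" and kr: "k < r" and rk: "r < 2 * k" and fl: "fl \<in> vecH3 r k"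
  shows "\<exists>A B. good_split k (map rcompl fl) A B"
    "path_end (map rcompl fl) \<in> fst (path_graph (map rcompl fl))"
proof -
  define ps where "ps = [k, r - k + 1]"
  define hs where "hs = map rcompl fl"
  have H0: "H0_3 r k = (complete_multipartite ps, (1, 0), (1, 1))" unfolding H0_3_def ps_def by simp
  have H0': "H0'_3 r k = (complete_multipartite ps, (0, 0), (1, 0))" unfolding H0'_3_def ps_def by simp
  have fl3: "3 \<le> length fl" "set fl \<subseteq> {H0_3 r k, H0'_3 r k}" "hd fl = H0_3 r k" "last fl = H0_3 r k"
    using fl unfolding vecH3_def by auto
  obtain m where m: "1 \<le> m" "m < length fl - 1" "fl ! m = H0'_3 r k"
    using fl unfolding vecH3_def by auto
  have pk: "\<forall>p<length ps. ps ! p \<le> k" unfolding ps_def using rk by (auto simp: nth_Cons')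
  have Vab: "(1,0) \<in> fst (complete_multipartite ps)" "(1,1) \<in> fst (complete_multipartite ps)"
    using kr unfolding fst_cm ps_def by auto
  have ne: "fl \<noteq> []" using fl3 by auto
  have lh: "length hs = length fl" unfolding hs_def by simp
  have hs0: "hs ! 0 = rcompl (complete_multipartite ps, (1, 0), (1, 1))"
    unfolding hs_def using ne fl3(3) H0 by (simp add: hd_conv_nth)
  have hsm: "hs ! m = rcompl (complete_multipartite ps, (0, 0), (1, 0))"
    unfolding hs_def using m H0' by simp
  have Dl: "\<forall>l<length hs. Dn k {} k (snd (fst (hs ! l)))"
  proof (intro allI impI)
    fix l assume l: "l < length hs"
    then have "fl ! l \<in> set fl" using lh by simp
    then have "fl ! l = H0_3 r k \<or> fl ! l = H0'_3 r k" using fl3(2) by blast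
    moreover have "Dn k {} k (snd (fst (rcompl (complete_multipartite ps, a, b))))" for a b
      by (rule Dn_rcompl_cm[OF pk])
    ultimately show "Dn k {} k (snd (fst (hs ! l)))" unfolding hs_def H0 H0' using l lh by auto
  qed
  have D0: "Dn k {fst (snd (hs ! 0))} 1 (snd (fst (hs ! 0)))"
  proof -
    have "Dn k {(1,0)} 1 (snd (fst (rcompl (complete_multipartite ps, (1, 0), (1, 1)))))"
      by (rule copy0_Dn[OF rcompl_cm_sub pk _ Vab _ k2]) simp_all
    then show ?thesis unfolding hs0 rcompl_def by simp
  qed
  have Em: "snd (fst (hs ! m)) \<subseteq> SP ps" unfolding hsm using rcompl_cm_sub by blast
  have abm: "fst (fst (snd (hs ! m))) \<noteq> fst (snd (snd (hs ! m)))" unfolding hsm rcompl_def by simp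
  have "\<exists>A B. good_split k hs A B"
    by (rule split_generic[OF m(1) _ Dl D0 Em abm]) (use k2 m(2) lh in simp_all)
  then show "\<exists>A B. good_split k (map rcompl fl) A B" unfolding hs_def .
  have "last hs = rcompl (H0_3 r k)" unfolding hs_def using ne fl3(4) by (simp add: last_map)
  then have "snd (snd (last hs)) \<in> fst (fst (last hs))"
    unfolding H0 rcompl_def using Vab by simp
  then show "path_end (map rcompl fl) \<in> fst (path_graph (map rcompl fl))"
    using end_in[of hs] fl3(1) lh unfolding hs_def by simp
qed

theorem lemma6p16:
  fixes k r s n :: nat and C p :: real
    and fam :: "nat \<Rightarrow> nat \<Rightarrow> (nat \<times> nat) rgraph list"
    and F :: "'v graph" and W :: "'v set"
  assumes "2 \<le> k" "k \<le> r" "1 \<le> s" "C > 1"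
    and "p \<ge> C * real n powr (- 2 / real k)"
    and "k dvd r \<Longrightarrow> fam \<in> fam_set (vecH1 r k) r s"
    and "\<not> k dvd r \<Longrightarrow> 2 * k < r \<Longrightarrow> fam \<in> fam_set (vecH2 r k) r s"
    and "r < 2 * k \<Longrightarrow> k < r \<Longrightarrow> fam \<in> fam_set (vecH3 r k) r s"
    and "is_absorbing_gadget (\<lambda>i j. map rcompl (fam i j)) (gcompl (Hdet r k)) r s F W"
  shows "Phi0 n p (delete_vertices F W) \<ge> C * real n
       \<and> Phi n p F W \<ge> C * real n powr (1 / real k)"
proof -
  note k2 = assms(1) and kr = assms(2) and s1 = assms(3) and C1 = assms(4) and pC = assms(5)
  define famb where "famb = (\<lambda>i j. map rcompl (fam i j))"
  define Hg where "Hg = gcompl (Hdet r k)"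
  have k0: "0 < k" "1 \<le> r" "1 \<le> k" using k2 kr by auto
  obtain \<sigma> f where sig: "\<forall>j<s. bij_betw (\<sigma> j) {..<r} (fst Hg)"
    and iso: "graph_iso F (gadget famb Hg r s \<sigma>) f" and fW: "f ` W = gadget_base famb s"
    and wf: "wf_graph F"
    using assms(9) unfolding is_absorbing_gadget_def famb_def Hg_def by blast
  define G where "G = gadget famb Hg r s \<sigma>"
  have SE: "(\<exists>A B. good_split k (famb i j) A B) \<and> path_end (famb i j) \<in> fst (path_graph (famb i j))"
    if ij: "i < r" "j < s" for i j
  proof (cases "k dvd r")
    case True
    then have "fam i j \<in> vecH1 r k" using assms(6) ij unfolding fam_set_def by blast
    then have "fam i j = [H1 r k, H1' r k]" unfolding vecH1_def by simp
    then show ?thesis using case1_split[OF k2 True kr] unfolding famb_def by simp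
  next
    case nd: False
    show ?thesis
    proof (cases "2 * k < r")
      case True
      then have "fam i j \<in> vecH2 r k" using assms(7) nd ij unfolding fam_set_def by blast
      then have "fam i j = [H0_2 r k, H0'_2 r k, H0'_2 r k, H0_2 r k]" unfolding vecH2_def by simp
      then show ?thesis using case2_split[OF k2 nd True] unfolding famb_def by simp
    next
      case False
      have "k \<noteq> r" using nd by auto
      then have kr': "k < r" using kr by simp
      have "2 * k \<noteq> r" using nd by auto
      then have rk: "r < 2 * k" using False by simp
      then have "fam i j \<in> vecH3 r k" using assms(8) kr' ij unfolding fam_set_def by blast
      then show ?thesis using case3_split[OF k2 kr' rk] unfolding famb_def by simp
    qed
  qed
  have split: "\<forall>i<r. \<forall>j<s. \<exists>A B. good_split k (famb i j) A B" using SE by blast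
  have len2: "2 \<le> length (famb i j)" if "i < r" "j < s" for i j
    using SE[OF that] unfolding good_split_def by blast
  have dH: "Dn k {} k (snd Hg)" unfolding Hg_def by (rule Dn_Hdet[OF k0(1,2)])
  have DG: "Dn k {} k (snd G) \<and> Dn k (gadget_base famb s) 1 (snd G)"
    unfolding G_def by (rule gadget_Dn[OF split dH sig k0(2) k0(3)])
  have isoU: "bij_betw f (fst F) (fst G) \<and> (\<forall>x\<in>fst F. \<forall>y\<in>fst F. {x, y} \<in> snd F \<longleftrightarrow> {f x, f y} \<in> snd G)"
    using iso unfolding graph_iso_def G_def .
  have bij: "bij_betw f (fst F) (fst G)" using isoU by (rule conjunct1)
  have isoE: "\<forall>x\<in>fst F. \<forall>y\<in>fst F. {x, y} \<in> snd F \<longleftrightarrow> {f x, f y} \<in> snd G"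
    using isoU by (rule conjunct2)
  have wfU: "finite (fst F) \<and> (\<forall>e\<in>snd F. \<exists>x y. x \<noteq> y \<and> x \<in> fst F \<and> y \<in> fst F \<and> e = {x, y})"
    using wf unfolding wf_graph_def .
  have wfE: "\<forall>e\<in>snd F. \<exists>x y. x \<noteq> y \<and> x \<in> fst F \<and> y \<in> fst F \<and> e = {x, y}" using wfU by (rule conjunct2)
  have finF: "finite (fst F)" using wfU by (rule conjunct1)
  have UF: "\<Union>(snd F) \<subseteq> fst F"
  proof
    fix z assume "z \<in> \<Union>(snd F)"
    then obtain e where e: "z \<in> e" "e \<in> snd F" by blast
    then obtain x y where "x \<in> fst F" "y \<in> fst F" "e = {x,y}" using wfE by meson
    then show "z \<in> fst F" using e(1) by auto
  qed
  have injF: "inj_on f (\<Union>(snd F))" by (rule inj_on_subset[OF bij_betw_imp_inj_on[OF bij] UF])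
  have img: "image f ` snd F \<subseteq> snd G"
  proof
    fix e' assume "e' \<in> image f ` snd F"
    then obtain e where e: "e \<in> snd F" "e' = f ` e" by blast
    then obtain x y where xy: "x \<in> fst F" "y \<in> fst F" "e = {x,y}" using wfE by meson
    have "{x,y} \<in> snd F" using e(1) xy(3) by simp
    then have "{f x, f y} \<in> snd G" using isoE xy(1,2) by blast
    then show "e' \<in> snd G" using e(2) xy(3) by simp
  qed
  have DF1: "Dn k {} k (snd F)" by (rule Dn_map[OF conjunct1[OF DG] injF img]) simp
  have DF2: "Dn k W 1 (snd F)"
  proof (rule Dn_map[OF conjunct2[OF DG] injF img])
    show "\<forall>x\<in>\<Union>(snd F). x \<in> W \<longrightarrow> f x \<in> gadget_base famb s" using fW by blast
  qed
  have s0: "0 < s" using s1 by simp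
  have bij0: "bij_betw (\<sigma> 0) {..<r} (fst Hg)" using sig s0 by blast
  have sur: "\<sigma> 0 ` {..<r} = fst Hg" by (rule bij_betw_imp_surj_on[OF bij0])
  have "(0,0) \<in> \<sigma> 0 ` {..<r}" using sur Hdet_edge(2)[OF k2 kr] unfolding Hg_def by simp
  then obtain i where i0: "i \<in> {..<r}" "(0,0) = \<sigma> 0 i" by (rule imageE)
  have i: "i < r" "\<sigma> 0 i = (0,0)" using i0 by simp_all
  have "(0,1) \<in> \<sigma> 0 ` {..<r}" using sur Hdet_edge(3)[OF k2 kr] unfolding Hg_def by simp
  then obtain i' where i0': "i' \<in> {..<r}" "(0,1) = \<sigma> 0 i'" by (rule imageE)
  have i': "i' < r" "\<sigma> 0 i' = (0,1)" using i0' by simp_all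
  define u where "u = glab famb i 0 (path_end (famb i 0))"
  define v where "v = glab famb i' 0 (path_end (famb i' 0))"
  have uvE: "{u, v} \<in> snd G"
  proof -
    have "{\<sigma> 0 i, \<sigma> 0 i'} \<in> snd Hg" using i i' Hdet_edge[OF k2 kr] unfolding Hg_def by simp
    then have "{u,v} \<in> {{glab famb a 0 (path_end (famb a 0)), glab famb a' 0 (path_end (famb a' 0))} | a a'.
                 a < r \<and> a' < r \<and> {\<sigma> 0 a, \<sigma> 0 a'} \<in> snd Hg}" unfolding u_def v_def using i i' by blast
    then have "{u,v} \<in> (\<Union>j<s. {{glab famb a j (path_end (famb a j)), glab famb a' j (path_end (famb a' j))} | a a'.
                 a < r \<and> a' < r \<and> {\<sigma> j a, \<sigma> j a'} \<in> snd Hg})" using s0 by (intro UN_I[of 0]) simp_all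
    then show ?thesis unfolding G_def gadget_def by (simp only: snd_conv) (rule UnI2)
  qed
  have uV: "u \<in> fst G"
  proof -
    have "u \<in> glab famb i 0 ` fst (path_graph (famb i 0))" using SE[OF i(1) s0] unfolding u_def by blast
    then have "u \<in> (\<Union>i<r. \<Union>j<s. glab famb i j ` fst (path_graph (famb i j)))" using i(1) s0 by blast
    then show ?thesis unfolding G_def gadget_def by (simp only: fst_conv)
  qed
  have vV: "v \<in> fst G"
  proof -
    have "v \<in> glab famb i' 0 ` fst (path_graph (famb i' 0))" using SE[OF i'(1) s0] unfolding v_def by blast
    then have "v \<in> (\<Union>i<r. \<Union>j<s. glab famb i j ` fst (path_graph (famb i j)))" using i'(1) s0 by blast
    then show ?thesis unfolding G_def gadget_def by (simp only: fst_conv)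
  qed
  have uB: "u \<notin> gadget_base famb s"
  proof
    assume "u \<in> gadget_base famb s"
    then have "glab famb i 0 (path_end (famb i 0)) \<in> gadget_base famb s" unfolding u_def .
    then have "path_end (famb i 0) = path_start (famb i 0)" by (rule conjunct2[OF glab_in_base])
    then show False using start_ne_end[OF len2[OF i(1) s0]] by simp
  qed
  have vB: "v \<notin> gadget_base famb s"
  proof
    assume "v \<in> gadget_base famb s"
    then have "glab famb i' 0 (path_end (famb i' 0)) \<in> gadget_base famb s" unfolding v_def .
    then have "path_end (famb i' 0) = path_start (famb i' 0)" by (rule conjunct2[OF glab_in_base])
    then show False using start_ne_end[OF len2[OF i'(1) s0]] by simp
  qed
  have surF: "f ` fst F = fst G" by (rule bij_betw_imp_surj_on[OF bij])
  have "u \<in> f ` fst F" using surF uV by simp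
  then obtain x where x0: "x \<in> fst F" "u = f x" by (rule imageE)
  have x: "x \<in> fst F" "f x = u" using x0 by simp_all
  have "v \<in> f ` fst F" using surF vV by simp
  then obtain y where y0: "y \<in> fst F" "v = f y" by (rule imageE)
  have y: "y \<in> fst F" "f y = v" using y0 by simp_all
  have "{f x, f y} \<in> snd G" using x(2) y(2) uvE by simp
  then have xyE: "{x, y} \<in> snd F" using isoE x(1) y(1) by blast
  have xW: "x \<notin> W"
  proof
    assume "x \<in> W"
    then have "f x \<in> gadget_base famb s" using fW by blast
    then show False using x(2) uB by simp
  qed
  have yW: "y \<notin> W"
  proof
    assume "y \<in> W"
    then have "f y \<in> gadget_base famb s" using fW by blast
    then show False using y(2) vB by simp
  qed
  define F' where "F' = delete_vertices F W"
  have F'e: "fst F' = fst F - W" "snd F' = {e \<in> snd F. e \<inter> W = {}}"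
    unfolding F'_def delete_vertices_def by simp_all
  have b1: "Phi n p F' {} \<ge> C * real n powr (real k / real k)"
  proof (rule Phi_ge[OF _ _ _ _ k0(1) C1 pC])
    show "Dn k {} k (snd F')" unfolding F'e by (rule Dn_subset[OF DF1]) blast
    show "finite (fst F')" unfolding F'e using finF by simp
    show "snd F' \<subseteq> Pow (fst F')" unfolding F'e using UF by blast
    have "{x,y} \<inter> W = {}" using xW yW by simp
    then have "{x,y} \<in> {e \<in> snd F. e \<inter> W = {}}" using xyE by simp
    then show "snd F' \<noteq> {}" unfolding F'e by blast
  qed
  have "real k / real k = 1" using k0 by simp
  then have b1': "Phi0 n p (delete_vertices F W) \<ge> C * real n" using b1 unfolding F'_def by simp
  have b2: "Phi n p F W \<ge> C * real n powr (real 1 / real k)"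
  proof (rule Phi_ge[OF DF2 finF _ _ k0(1) C1 pC])
    show "snd F \<subseteq> Pow (fst F)" using UF by blast
    show "snd F \<noteq> {}" using xyE by blast
  qed
  show ?thesis using b1' b2 by simp
qed

end
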